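(* Let $\mathcal{G}=\langle\mathcal{Q},\mathbf{f}\rangle$ satisfy Assumptions 1 and 2 and suppose $\boldsymbol{\Upsilon}_{\mathbf{F}}$ is a P-matrix. Then the best-response mapping $\mathcal{B}:\mathcal{Q}\to\mathcal{Q}$, $\mathcal{B}(\mathbf{x})=(\mathcal{B}_i(\mathbf{x}_{-i}))_{i=1}^I$ with $\mathcal{B}_i(\mathbf{x}_{-i})=\arg\min_{\mathbf{x}_i\in\mathcal{Q}_i}f_i(\mathbf{x}_i,\mathbf{x}_{-i})$, is well defined and is a block-contraction: there exists $\mathbf{c}>\mathbf{0}$ such that $$\|\mathcal{B}(\mathbf{x})-\mathcal{B}(\mathbf{y})\|_{\rm block}^{\mathbf{c}}\le\|\boldsymbol{\Gamma}_{\mathbf{F}}\|^{\mathbf{c}}_{\infty,\rm mat}\,\|\mathbf{x}-\mathbf{y}\|^{\mathbf{c}}_{\rm block}\quad\forall\mathbf{x},\mathbf{y}\in\mathcal{Q},$$ with $\|\boldsymbol{\Gamma}_{\mathbf{F}}\|^{\mathbf{c}}_{\infty,\rm mat}<1$.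
   Context: Real NEP setting: player $i$ chooses $\mathbf{x}_i\in\mathcal{Q}_i\subseteq\mathbb{R}^{n_i}$, minimizes $f_i(\mathbf{x}_i,\mathbf{x}_{-i})$; $\mathcal{Q}=\prod_i\mathcal{Q}_i$. Assumption 1: each $\mathcal{Q}_i$ nonempty closed convex, each $f_i$ continuously differentiable on $\mathcal{Q}$ and convex in $\mathbf{x}_i$ for fixed $\mathbf{x}_{-i}$. Assumption 2: each $f_i$ twice continuously differentiable with bounded derivatives on $\mathcal{Q}$. $\mathbf{F}_i=\nabla_{\mathbf{x}_i}f_i$. With arbitrary nonsingular $\mathbf{C}_i\in\mathbb{R}^{n_i\times n_i}$: $\alpha_i^{\min}=\inf_{\mathbf{x}\in\mathcal{Q}}\lambda_{\rm least}(\mathbf{C}_i^T\mathbf{J}_i\mathbf{F}_i(\mathbf{x})\mathbf{C}_i)$ ($\lambda_{\rm least}(\mathbf{A})$ = smallest eigenvalue of $(\mathbf{A}+\mathbf{A}^T)/2$, $\mathbf{J}_j\mathbf{F}_i$ = Jacobian of $\mathbf{F}_i$ w.r.t. $\mathbf{x}_j$), $\beta_{ij}^{\max}=\sup_{\mathbf{x}\in\mathcal{Q}}\|\mathbf{C}_i^T\mathbf{J}_j\mathbf{F}_i(\mathbf{x})\mathbf{C}_j\|_2$; $\boldsymbol{\Upsilon}_{\mathbf{F}}$ has diagonal $\alpha_i^{\min}$ and off-diagonal $-\beta_{ij}^{\max}$; $\boldsymbol{\Gamma}_{\mathbf{F}}$ has zero diagonal and $[\boldsymbol{\Gamma}_{\mathbf{F}}]_{ij}=\beta_{ij}^{\max}/\alpha_i^{\min}$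 for $i\ne j$. A P-matrix has all principal minors positive. Norms: for $\mathbf{c}=(c_i)>\mathbf{0}$, $\|\mathbf{x}\|^{\mathbf{c}}_{\rm block}=\max_i\|\mathbf{C}_i^{-1}\mathbf{x}_i\|/c_i$ (Euclidean norm inside), and for $\mathbf{A}\in\mathbb{R}^{I\times I}$, $\|\mathbf{A}\|^{\mathbf{c}}_{\infty,\rm mat}=\max_i\frac1{c_i}\sum_j|[\mathbf{A}]_{ij}|c_j$. *)

theory Defs
  imports "HOL-Analysis.Analysis"
begin

text \<open>The finite player type 'p
and the block map blk :: 'k => 'p assign each coordinate to one player; player i's
strategy space R^{n_i} is the coordinate subspace blk_space blk i (n_i = number of
coordinates k with blk k = i).\<close>

definition blk_space :: "('k::finite \<Rightarrow> 'p) \<Rightarrow> 'p \<Rightarrow> (real^'k) set" where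
  "blk_space blk i = {v. \<forall>k. blk k \<noteq> i \<longrightarrow> v $ k = 0}"

text \<open>x_i, embedded into real^'k\<close>
definition blk_proj :: "('k::finite \<Rightarrow> 'p) \<Rightarrow> 'p \<Rightarrow> real^'k \<Rightarrow> real^'k" where
  "blk_proj blk i x = (\<chi> k. if blk k = i then x $ k else 0)"

definition blk_upd :: "('k::finite \<Rightarrow> 'p) \<Rightarrow> real^'k \<Rightarrow> 'p \<Rightarrow> real^'k \<Rightarrow> real^'k" where
  "blk_upd blk x i y = (\<chi> k. if blk k = i then y $ k else x $ k)"

definition prod_set :: "('k::finite \<Rightarrow> 'p) \<Rightarrow> ('p \<Rightarrow> (real^'k) set) \<Rightarrow> (real^'k) set" where
  "prod_set blk Qs = {x. \<forall>i. blk_proj blk i x \<in> Qs i}"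

text \<open>Block-diagonal matrix: encodes the family of matrices C_i (block (i,i)).\<close>
definition block_diag :: "('k::finite \<Rightarrow> 'p) \<Rightarrow> real^'k^'k \<Rightarrow> bool" where
  "block_diag blk C \<longleftrightarrow> (\<forall>k l. blk k \<noteq> blk l \<longrightarrow> C $ k $ l = 0)"

text \<open>Eigenvalues of the (i,i) diagonal block of (A + A^T)/2, i.e. of the n_i x n_i
symmetric part of the submatrix, acting on player i's coordinate subspace.\<close>
definition block_sym_eigs :: "('k::finite \<Rightarrow> 'p) \<Rightarrow> real^'k^'k \<Rightarrow> 'p \<Rightarrow> real set" where
  "block_sym_eigs blk A i = {mu. \<exists>v. v \<in> blk_space blk i \<and> v \<noteq> 0 \<and>
      blk_proj blk i ((inverse 2 *\<^sub>R (A + transpose A)) *v v) = mu *\<^sub>R v}"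

definition block_lambda_least :: "('k::finite \<Rightarrow> 'p) \<Rightarrow> real^'k^'k \<Rightarrow> 'p \<Rightarrow> real" where
  "block_lambda_least blk A i = Min (block_sym_eigs blk A i)"

definition block_norm2 :: "('k::finite \<Rightarrow> 'p) \<Rightarrow> real^'k^'k \<Rightarrow> 'p \<Rightarrow> 'p \<Rightarrow> real" where
  "block_norm2 blk A i j = onorm (\<lambda>v. blk_proj blk i (A *v blk_proj blk j v))"

text \<open>Full matrix whose (i,j) block is J_j F_i(x): row k (of block blk k) is taken
from the Hessian of f_{blk k}.\<close>
definition jac_F :: "('k::finite \<Rightarrow> 'p) \<Rightarrow> ('p \<Rightarrow> real^'k \<Rightarrow> real^'k^'k) \<Rightarrow> real^'k \<Rightarrow> real^'k^'k" where
  "jac_F blk hess x = (\<chi> k l. hess (blk k) x $ k $ l)"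

text \<open>Block (i,j) of C^T (JF x) C is C_i^T J_j F_i(x) C_j for block diagonal C\<close>
definition scaled_jac :: "('k::finite \<Rightarrow> 'p) \<Rightarrow> real^'k^'k \<Rightarrow> ('p \<Rightarrow> real^'k \<Rightarrow> real^'k^'k) \<Rightarrow> real^'k \<Rightarrow> real^'k^'k" where
  "scaled_jac blk C hess x = transpose C ** jac_F blk hess x ** C"

definition alpha_min :: "('k::finite \<Rightarrow> 'p) \<Rightarrow> real^'k^'k \<Rightarrow> ('p \<Rightarrow> real^'k \<Rightarrow> real^'k^'k) \<Rightarrow> (real^'k) set \<Rightarrow> 'p \<Rightarrow> real" where
  "alpha_min blk C hess Q i = (INF x\<in>Q. block_lambda_least blk (scaled_jac blk C hess x) i)"

definition beta_max :: "('k::finite \<Rightarrow> 'p) \<Rightarrow> real^'k^'k \<Rightarrow> ('p \<Rightarrow> real^'k \<Rightarrow> real^'k^'k) \<Rightarrow> (real^'k) set \<Rightarrow> 'p \<Rightarrow> 'p \<Rightarrow> real" where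
  "beta_max blk C hess Q i j = (SUP x\<in>Q. block_norm2 blk (scaled_jac blk C hess x) i j)"

definition Upsilon_F :: "('k::finite \<Rightarrow> 'p::finite) \<Rightarrow> real^'k^'k \<Rightarrow> ('p \<Rightarrow> real^'k \<Rightarrow> real^'k^'k) \<Rightarrow> (real^'k) set \<Rightarrow> real^'p^'p" where
  "Upsilon_F blk C hess Q = (\<chi> i j. if i = j then alpha_min blk C hess Q i else - beta_max blk C hess Q i j)"

definition Gamma_F :: "('k::finite \<Rightarrow> 'p::finite) \<Rightarrow> real^'k^'k \<Rightarrow> ('p \<Rightarrow> real^'k \<Rightarrow> real^'k^'k) \<Rightarrow> (real^'k) set \<Rightarrow> real^'p^'p" where
  "Gamma_F blk C hess Q = (\<chi> i j. if i = j then 0 else beta_max blk C hess Q i j / alpha_min blk C hess Q i)"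

definition principal_minor :: "real^'n^'n \<Rightarrow> 'n set \<Rightarrow> real" where
  "principal_minor A S = (\<Sum>p | p permutes S. of_int (sign p) * (\<Prod>i\<in>S. A $ i $ p i))"

definition P_matrix :: "real^'n::finite^'n \<Rightarrow> bool" where
  "P_matrix A \<longleftrightarrow> (\<forall>S. S \<noteq> {} \<longrightarrow> principal_minor A S > 0)"

definition block_vnorm :: "('k::finite \<Rightarrow> 'p::finite) \<Rightarrow> real^'k^'k \<Rightarrow> ('p \<Rightarrow> real) \<Rightarrow> real^'k \<Rightarrow> real" where
  "block_vnorm blk C c x = Max (range (\<lambda>i. norm (matrix_inv C *v blk_proj blk i x) / c i))"

definition weighted_inf_mat_norm :: "('p::finite \<Rightarrow> real) \<Rightarrow> real^'p^'p \<Rightarrow> real" where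
  "weighted_inf_mat_norm c A = Max (range (\<lambda>i. (1 / c i) * (\<Sum>j\<in>UNIV. \<bar>A $ i $ j\<bar> * c j)))"

definition is_best_resp :: "('k::finite \<Rightarrow> 'p) \<Rightarrow> ('p \<Rightarrow> real^'k \<Rightarrow> real) \<Rightarrow> ('p \<Rightarrow> (real^'k) set) \<Rightarrow> real^'k \<Rightarrow> 'p \<Rightarrow> real^'k \<Rightarrow> bool" where
  "is_best_resp blk f Qs x i y \<longleftrightarrow>
     y \<in> Qs i \<and> (\<forall>z\<in>Qs i. f i (blk_upd blk x i y) \<le> f i (blk_upd blk x i z))"

definition best_resp :: "('k::finite \<Rightarrow> 'p::finite) \<Rightarrow> ('p \<Rightarrow> real^'k \<Rightarrow> real) \<Rightarrow> ('p \<Rightarrow> (real^'k) set) \<Rightarrow> real^'k \<Rightarrow> real^'k" where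
  "best_resp blk f Qs x = (\<Sum>i\<in>UNIV. THE y. is_best_resp blk f Qs x i y)"

end

theory Submission
  imports Defs
begin

definition emb :: "'n::finite set \<Rightarrow> real^'n^'n \<Rightarrow> real^'n^'n" where
  "emb T A = (\<chi> i j. if i\<in>T \<and> j\<in>T then A$i$j else if i = j then 1 else 0)"

lemma det_emb: "det (emb T (A::real^'n::finite^'n)) = principal_minor A T"
proof -
  have "det (emb T A) = (\<Sum>p\<in>{p. p permutes T}. of_int (sign p) * (\<Prod>i\<in>UNIV. emb T A $ i $ p i))"
    unfolding det_def
  proof (rule sum.mono_neutral_right)
    show "finite {p. p permutes (UNIV::'n set)}" by (simp add: finite_permutations)
    show "{p. p permutes T} \<subseteq> {p. p permutes (UNIV::'n set)}" using permutes_subset by blast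
    show "\<forall>p\<in>{p. p permutes (UNIV::'n set)} - {p. p permutes T}.
        of_int (sign p) * (\<Prod>i\<in>UNIV. emb T A $ i $ p i) = 0"
    proof
      fix p assume p: "p \<in> {p. p permutes (UNIV::'n set)} - {p. p permutes T}"
      then obtain x where x: "x \<notin> T" "p x \<noteq> x"
        using permutes_superset[of p UNIV T] by auto
      have "emb T A $ x $ p x = 0" using x by (simp add: emb_def)
      then have "(\<Prod>i\<in>UNIV. emb T A $ i $ p i) = 0" by (meson UNIV_I finite prod_zero)
      then show "of_int (sign p) * (\<Prod>i\<in>UNIV. emb T A $ i $ p i) = 0" by simp
    qed
  qed
  also have "\<dots> = principal_minor A T"
    unfolding principal_minor_def
  proof (rule sum.cong[OF refl])
    fix p assume "p \<in> {p. p permutes T}"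
    then have p: "p permutes T" by simp
    have "(\<Prod>i\<in>UNIV. emb T A $ i $ p i) = (\<Prod>i\<in>T. A $ i $ p i)"
    proof (rule prod.mono_neutral_cong_right)
      show "\<forall>i\<in>UNIV - T. emb T A $ i $ p i = 1"
        using permutes_not_in[OF p] by (simp add: emb_def)
      show "\<And>x. x \<in> T \<Longrightarrow> emb T A $ x $ p x = A $ x $ p x"
        using permutes_in_image[OF p] by (simp add: emb_def)
    qed auto
    then show "of_int (sign p) * (\<Prod>i\<in>UNIV. emb T A $ i $ p i) = of_int (sign p) * (\<Prod>i\<in>T. A $ i $ p i)"
      by simp
  qed
  finally show ?thesis .
qed

lemma det_rowops:
  fixes M :: "real^'n::finite^'n"
  assumes "finite W" "k \<notin> W"
  shows "det (\<chi> i. if i\<in>W then row i M - (M$i$k/M$k$k) *s row k M else row i M) = det M"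
  using assms
proof (induction W rule: finite_induct)
  case empty
  have "(\<chi> i. if i\<in>{} then row i M - (M$i$k/M$k$k) *s row k M else row i M) = M"
    by (vector row_def)
  then show ?case by simp
next
  case (insert w W)
  let ?R = "(\<chi> i. if i\<in>W then row i M - (M$i$k/M$k$k) *s row k M else row i M)"
  have wk: "w \<noteq> k" using insert by auto
  have eq: "(\<chi> i. if i\<in>insert w W then row i M - (M$i$k/M$k$k) *s row k M else row i M)
     = (\<chi> i. if i = w then row w ?R + (-(M$w$k/M$k$k)) *s row k ?R else row i ?R)"
    using insert wk by (vector row_def)
  have "det (\<chi> i. if i = w then row w ?R + (-(M$w$k/M$k$k)) *s row k ?R else row i ?R) = det ?R"
    by (rule det_row_operation[OF wk])
  then show ?case using insert eq by simp
qed

lemma det_colk: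
  fixes N M :: "real^'n::finite^'n"
  assumes N0: "\<And>i. i \<noteq> k \<Longrightarrow> N$i$k = 0"
    and Mk: "\<And>j. M$k$j = (if j = k then 1 else 0)"
    and NM: "\<And>i j. i \<noteq> k \<Longrightarrow> j \<noteq> k \<Longrightarrow> N$i$j = M$i$j"
  shows "det N = N$k$k * det M"
proof -
  let ?P0 = "{p. p permutes (UNIV::'n set) \<and> p k = k}"
  let ?X = "\<lambda>p. (\<Prod>i\<in>UNIV-{k}. M $ i $ p i)"
  have fin: "finite {p. p permutes (UNIV::'n set)}" by (simp add: finite_permutations)
  have sub: "?P0 \<subseteq> {p. p permutes (UNIV::'n set)}" by auto
  have "det N = (\<Sum>p\<in>?P0. of_int (sign p) * (\<Prod>i\<in>UNIV. N $ i $ p i))"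
    unfolding det_def
  proof (rule sum.mono_neutral_right[OF fin sub], rule ballI)
    fix p assume p: "p \<in> {p. p permutes (UNIV::'n set)} - ?P0"
    then have pp: "p permutes UNIV" and pk: "p k \<noteq> k" by auto
    let ?i = "inv p k"
    have pi: "p ?i = k" using permutes_inverses[OF pp] by simp
    have "?i \<noteq> k" using pi pk by auto
    then have "N $ ?i $ p ?i = 0" using pi N0 by simp
    then have "(\<Prod>i\<in>UNIV. N $ i $ p i) = 0" by (meson UNIV_I finite prod_zero)
    then show "of_int (sign p) * (\<Prod>i\<in>UNIV. N $ i $ p i) = 0" by simp
  qed
  also have "\<dots> = (\<Sum>p\<in>?P0. N$k$k * (of_int (sign p) * ?X p))"
  proof (rule sum.cong[OF refl])
    fix p assume "p \<in> ?P0"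
    then have pp: "p permutes UNIV" and pk: "p k = k" by auto
    have "(\<Prod>i\<in>UNIV. N $ i $ p i) = N $ k $ p k * (\<Prod>i\<in>UNIV-{k}. N $ i $ p i)"
      by (simp add: prod.remove)
    also have "(\<Prod>i\<in>UNIV-{k}. N $ i $ p i) = ?X p"
    proof (rule prod.cong[OF refl])
      fix i assume "i \<in> UNIV - {k}"
      then have ik: "i \<noteq> k" by auto
      then have "p i \<noteq> k" using pk permutes_inj[OF pp] by (metis injD)
      then show "N $ i $ p i = M $ i $ p i" using NM ik by simp
    qed
    finally show "of_int (sign p) * (\<Prod>i\<in>UNIV. N $ i $ p i) = N$k$k * (of_int (sign p) * ?X p)"
      using pk by simp
  qed
  also have "\<dots> = N$k$k * (\<Sum>p\<in>?P0. of_int (sign p) * ?X p)"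
    by (simp add: sum_distrib_left)
  also have "(\<Sum>p\<in>?P0. of_int (sign p) * ?X p) = det M"
    unfolding det_def
  proof (rule sym, rule sum.mono_neutral_cong_right[OF fin sub])
    show "\<forall>p\<in>{p. p permutes (UNIV::'n set)} - ?P0. of_int (sign p) * (\<Prod>i\<in>UNIV. M $ i $ p i) = 0"
    proof
      fix p assume p: "p \<in> {p. p permutes (UNIV::'n set)} - ?P0"
      then have "p k \<noteq> k" by auto
      then have "M $ k $ p k = 0" using Mk by simp
      then have "(\<Prod>i\<in>UNIV. M $ i $ p i) = 0" by (meson UNIV_I finite prod_zero)
      then show "of_int (sign p) * (\<Prod>i\<in>UNIV. M $ i $ p i) = 0" by simp
    qed
    fix p assume "p \<in> ?P0"
    then have pk: "p k = k" by auto
    have "(\<Prod>i\<in>UNIV. M $ i $ p i) = M $ k $ p k * ?X p" by (simp add: prod.remove)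
    then show "of_int (sign p) * (\<Prod>i\<in>UNIV. M $ i $ p i) = of_int (sign p) * ?X p"
      using pk Mk by simp
  qed
  finally show ?thesis .
qed

definition schur :: "real^'n^'n \<Rightarrow> 'n \<Rightarrow> real^'n^'n" where
  "schur A k = (\<chi> i j. A$i$j - A$i$k * A$k$j / A$k$k)"

lemma det_schur:
  fixes A :: "real^'n::finite^'n"
  assumes kT: "k \<notin> T" and a: "A$k$k \<noteq> 0"
  shows "det (emb (insert k T) A) = A$k$k * det (emb T (schur A k))"
proof -
  let ?E = "emb (insert k T) A"
  let ?N = "(\<chi> i. if i\<in>UNIV-{k} then row i ?E - (?E$i$k/?E$k$k) *s row k ?E else row i ?E)"
  have "det ?N = det ?E" by (rule det_rowops) auto
  have Ekk: "?E$k$k = A$k$k" by (simp add: emb_def)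
  have "det ?N = ?N$k$k * det (emb T (schur A k))"
  proof (rule det_colk)
    fix i assume ik: "i \<noteq> k"
    have "?N$i$k = ?E$i$k - ?E$i$k / ?E$k$k * ?E$k$k" using ik by (simp add: row_def)
    then show "?N$i$k = 0" using a Ekk by simp
  next
    fix j show "emb T (schur A k) $ k $ j = (if j = k then 1 else 0)"
      using kT by (simp add: emb_def)
  next
    fix i j assume ik: "i \<noteq> k" and jk: "j \<noteq> k"
    have "?N$i$j = ?E$i$j - ?E$i$k / ?E$k$k * ?E$k$j" using ik by (simp add: row_def)
    then show "?N$i$j = emb T (schur A k) $ i $ j"
      using kT a ik jk Ekk by (cases "i\<in>T"; cases "j\<in>T") (simp_all add: emb_def schur_def)
  qed
  moreover have "?N$k$k = A$k$k" by (simp add: row_def emb_def)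
  ultimately show ?thesis using \<open>det ?N = det ?E\<close> by simp
qed

lemma det_emb_single: "det (emb {k} (A::real^'n::finite^'n)) = A$k$k"
proof -
  have "det (emb {k} A) = principal_minor A {k}" by (rule det_emb)
  also have "\<dots> = A$k$k" unfolding principal_minor_def
    by (simp add: permutes_sing sign_id)
  finally show ?thesis .
qed

lemma mmatrix_aux:
  assumes "finite S"
  shows "\<forall>A::real^'n::finite^'n. (\<forall>i\<in>S. \<forall>j\<in>S. i \<noteq> j \<longrightarrow> A$i$j \<le> 0)
    \<longrightarrow> (\<forall>T. T \<subseteq> S \<longrightarrow> T \<noteq> {} \<longrightarrow> det (emb T A) > 0)
    \<longrightarrow> (\<exists>c. (\<forall>i\<in>S. c i > 0) \<and> (\<forall>i\<in>S. (\<Sum>j\<in>S. A$i$j * c j) > 0))"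
  using assms
proof (induction S rule: finite_induct)
  case empty
  then show ?case by auto
next
  case (insert k S)
  show ?case
  proof (intro allI impI)
    fix A :: "real^'n^'n"
    assume Z: "\<forall>i\<in>insert k S. \<forall>j\<in>insert k S. i \<noteq> j \<longrightarrow> A$i$j \<le> 0"
      and D: "\<forall>T. T \<subseteq> insert k S \<longrightarrow> T \<noteq> {} \<longrightarrow> det (emb T A) > 0"
    define a where "a = A$k$k"
    have apos: "a > 0" using D[rule_format, of "{k}"] by (simp add: det_emb_single a_def)
    let ?B = "schur A k"
    have ZB: "\<forall>i\<in>S. \<forall>j\<in>S. i \<noteq> j \<longrightarrow> ?B$i$j \<le> 0"
    proof (intro ballI impI)
      fix i j assume ij: "i\<in>S" "j\<in>S" "i \<noteq> j"
      have "i \<noteq> k" "j \<noteq> k" using ij insert by auto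
      then have "A$i$k \<le> 0" "A$k$j \<le> 0" "A$i$j \<le> 0" using Z ij by auto
      then have "A$i$k * A$k$j / a \<ge> 0" using apos by (simp add: zero_le_mult_iff)
      then show "?B$i$j \<le> 0" using \<open>A$i$j \<le> 0\<close> by (simp add: schur_def a_def)
    qed
    have DB: "\<forall>T. T \<subseteq> S \<longrightarrow> T \<noteq> {} \<longrightarrow> det (emb T ?B) > 0"
    proof (intro allI impI)
      fix T assume T: "T \<subseteq> S" "T \<noteq> {}"
      have kT: "k \<notin> T" using T insert by auto
      have "det (emb (insert k T) A) = a * det (emb T ?B)"
        using det_schur[OF kT] apos by (simp add: a_def)
      moreover have "det (emb (insert k T) A) > 0" using D T by (metis insert_mono insert_not_empty)
      ultimately show "det (emb T ?B) > 0" using apos by (simp add: zero_less_mult_iff)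
    qed
    obtain c' where c'pos: "\<forall>i\<in>S. c' i > 0" and c'row: "\<forall>i\<in>S. (\<Sum>j\<in>S. ?B$i$j * c' j) > 0"
      using mp[OF mp[OF spec[OF insert.IH, of ?B] ZB] DB] by blast
    define r where "r i = (\<Sum>j\<in>S. ?B$i$j * c' j)" for i
    define \<delta> where "\<delta> = Min (insert 1 ((\<lambda>i. r i / (\<bar>A$i$k\<bar> + 1)) ` S))"
    have dpos: "\<delta> > 0" unfolding \<delta>_def using insert c'row r_def
      by (subst Min_gr_iff) (auto intro!: divide_pos_pos)
    have dle: "\<delta> \<le> r i / (\<bar>A$i$k\<bar> + 1)" if "i \<in> S" for i
      unfolding \<delta>_def using insert that by (intro Min_le) auto
    define s where "s = (\<Sum>j\<in>S. A$k$j * c' j)"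
    define c where "c j = (if j = k then \<delta> - s / a else c' j)" for j
    have s_le: "s \<le> 0" unfolding s_def
    proof (rule sum_nonpos)
      fix j assume j: "j \<in> S"
      then have "j \<noteq> k" using insert by auto
      then have "A$k$j \<le> 0" using Z j by auto
      then show "A$k$j * c' j \<le> 0" using c'pos j by (simp add: mult_nonpos_nonneg less_imp_le)
    qed
    have sumS: "(\<Sum>j\<in>S. A$i$j * c j) = (\<Sum>j\<in>S. A$i$j * c' j)" for i
      using insert by (intro sum.cong) (auto simp: c_def)
    have ins: "(\<Sum>j\<in>insert k S. A$i$j * c j) = A$i$k * (\<delta> - s / a) + (\<Sum>j\<in>S. A$i$j * c' j)" for i
    proof -
      have "(\<Sum>j\<in>insert k S. A$i$j * c j) = A$i$k * c k + (\<Sum>j\<in>S. A$i$j * c j)"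
        using insert by simp
      then show ?thesis by (simp only: sumS) (simp add: c_def)
    qed
    show "\<exists>c. (\<forall>i\<in>insert k S. c i > 0) \<and> (\<forall>i\<in>insert k S. (\<Sum>j\<in>insert k S. A$i$j * c j) > 0)"
    proof (intro exI conjI ballI)
      fix i assume i: "i \<in> insert k S"
      show "c i > 0"
      proof (cases "i = k")
        case True
        have "- s / a \<ge> 0" using s_le apos by (simp add: divide_nonpos_pos)
        then show ?thesis using True dpos by (simp add: c_def)
      next
        case False then show ?thesis using i c'pos by (simp add: c_def)
      qed
      show "(\<Sum>j\<in>insert k S. A$i$j * c j) > 0"
      proof (cases "i = k")
        case True
        have "(\<Sum>j\<in>insert k S. A$i$j * c j) = a * (\<delta> - s / a) + s"
          using True by (simp only: ins) (simp add: a_def s_def)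
        also have "\<dots> = a * \<delta>" using apos by (simp add: field_simps)
        finally show ?thesis using apos dpos by simp
      next
        case False
        then have iS: "i \<in> S" using i by auto
        have "(\<Sum>j\<in>S. A$i$j * c' j) = (\<Sum>j\<in>S. ?B$i$j * c' j + A$i$k * (A$k$j * c' j) / a)"
          by (intro sum.cong) (auto simp: schur_def a_def field_simps)
        also have "\<dots> = r i + A$i$k * s / a"
          by (simp add: sum.distrib r_def s_def sum_divide_distrib sum_distrib_left)
        finally have e1: "(\<Sum>j\<in>S. A$i$j * c' j) = r i + A$i$k * s / a" .
        have "(\<Sum>j\<in>insert k S. A$i$j * c j) = A$i$k * (\<delta> - s / a) + (r i + A$i$k * s / a)"
          by (simp only: ins e1)
        also have "\<dots> = r i + A$i$k * \<delta>" by (simp add: algebra_simps)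
        finally have e2: "(\<Sum>j\<in>insert k S. A$i$j * c j) = r i + A$i$k * \<delta>" .
        have rpos: "r i > 0" using c'row iS r_def by auto
        have "A$i$k \<le> 0" using Z iS False i by auto
        have "\<delta> * (\<bar>A$i$k\<bar> + 1) \<le> r i" using dle[OF iS] by (simp add: field_simps)
        then have "\<delta> * \<bar>A$i$k\<bar> < r i" using dpos by (simp add: algebra_simps)
        then have "- (A$i$k * \<delta>) < r i" using \<open>A$i$k \<le> 0\<close> dpos by (cases "A$i$k < 0") (auto simp: abs_if algebra_simps)
        then show ?thesis using e2 by linarith
      qed
    qed
  qed
qed

lemma mmatrix:
  fixes A :: "real^'n::finite^'n"
  assumes Z: "\<And>i j. i \<noteq> j \<Longrightarrow> A$i$j \<le> 0" and P: "P_matrix A"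
  shows "\<exists>c. (\<forall>i. c i > 0) \<and> (\<forall>i. (\<Sum>j\<in>UNIV. A$i$j * c j) > 0)"
proof -
  have "\<forall>T. T \<subseteq> UNIV \<longrightarrow> T \<noteq> {} \<longrightarrow> det (emb T A) > 0"
    using P by (simp add: P_matrix_def det_emb)
  then show ?thesis using mmatrix_aux[of "UNIV::'n set"] Z by auto
qed

lemma blk_proj_add: "blk_proj blk i (x + y) = blk_proj blk i x + blk_proj blk i y"
  by (simp add: blk_proj_def vec_eq_iff)
lemma blk_proj_diff: "blk_proj blk i (x - y) = blk_proj blk i x - blk_proj blk i y"
  by (simp add: blk_proj_def vec_eq_iff)
lemma blk_proj_scaleR: "blk_proj blk i (r *\<^sub>R x) = r *\<^sub>R blk_proj blk i x"
  by (simp add: blk_proj_def vec_eq_iff)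
lemma blk_proj_minus: "blk_proj blk i (- x) = - blk_proj blk i x"
  by (simp add: blk_proj_def vec_eq_iff)
lemma blk_proj_zero[simp]: "blk_proj blk i 0 = 0"
  by (simp add: blk_proj_def vec_eq_iff)
lemma blk_proj_proj: "blk_proj blk i (blk_proj blk j x) = (if i = j then blk_proj blk i x else 0)"
  by (simp add: blk_proj_def vec_eq_iff)
lemma blk_space_iff: "v \<in> blk_space blk i \<longleftrightarrow> blk_proj blk i v = v"
  by (auto simp add: blk_proj_def blk_space_def vec_eq_iff)
lemma blk_proj_in: "blk_proj blk i x \<in> blk_space blk i"
  by (simp add: blk_space_iff blk_proj_proj)
lemma blk_proj_sum: "(\<Sum>j\<in>A. blk_proj blk i (g j)) = blk_proj blk i (\<Sum>j\<in>A. g j)"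
  by (induction A rule: infinite_finite_induct) (simp_all add: blk_proj_add)

lemma sum_blk_proj: "(\<Sum>i\<in>UNIV. blk_proj (blk::'k::finite \<Rightarrow> 'p::finite) i x) = x"
proof -
  have "(\<Sum>xa\<in>UNIV. if blk k = xa then x$k else 0) = x$k" for k
    using sum.delta'[of UNIV "blk k" "\<lambda>_. x$k"] by simp
  then show ?thesis by (simp add: vec_eq_iff blk_proj_def sum_component)
qed

lemma blk_upd_eq: "blk_upd blk x i y = x - blk_proj blk i x + blk_proj blk i y"
  by (simp add: blk_upd_def blk_proj_def vec_eq_iff)

lemma inner_blk_proj: "blk_proj blk i u \<bullet> v = blk_proj blk i u \<bullet> blk_proj blk i v"
  by (simp add: blk_proj_def inner_vec_def) (rule sum.cong, auto)

lemma inner_blk_space: "u \<in> blk_space blk i \<Longrightarrow> u \<bullet> v = u \<bullet> blk_proj blk i v"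
  by (metis blk_space_iff inner_blk_proj)

lemma blk_space_subspace: "subspace (blk_space blk i)"
  by (auto simp add: subspace_def blk_space_def)

lemma blk_space_closed: "closed (blk_space (blk::'k::finite \<Rightarrow> 'p) i)"
proof -
  have "blk_space blk i = (\<Inter>k\<in>{k. blk k \<noteq> i}. {v::real^'k. v $ k = 0})"
    by (auto simp: blk_space_def)
  moreover have "closed {v::real^'k. v $ k = 0}" for k
    by (rule closed_Collect_eq) (auto intro: continuous_intros)
  ultimately show ?thesis by auto
qed

lemma blk_proj_mat: "blk_proj blk i x = (\<chi> k l. if k = l \<and> blk k = i then 1 else 0) *v x"
proof -
  have "(\<Sum>l\<in>UNIV. (if k = l \<and> blk k = i then 1 else 0) * x $ l) = (\<Sum>l\<in>UNIV. if l = k then (if blk k = i then x $ k else 0) else 0)" for k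
    by (rule sum.cong) auto
  then have "(\<Sum>l\<in>UNIV. (if k = l \<and> blk k = i then 1 else 0) * x $ l) = (if blk k = i then x $ k else 0)" for k
    by simp
  then show ?thesis by (simp add: blk_proj_def matrix_vector_mult_def vec_eq_iff)
qed

lemma bl_blk_proj: "bounded_linear (blk_proj blk i)"
  unfolding blk_proj_mat by simp

lemma norm_blk_proj_le: "norm (blk_proj blk i x) \<le> norm x"
proof -
  have "blk_proj blk i x \<bullet> blk_proj blk i x \<le> x \<bullet> x"
    by (simp add: inner_vec_def blk_proj_def, intro sum_mono) auto
  then show ?thesis by (simp add: norm_le)
qed

lemma inner_transpose: "(A *v x) \<bullet> y = x \<bullet> (transpose A *v (y::real^'m))"
  for A :: "real^'n^'m"
  by (metis dot_lmul_matrix inner_commute transpose_matrix_vector)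

lemma blockdiag_commute:
  fixes C :: "real^'k::finite^'k"
  assumes "block_diag blk C"
  shows "C *v blk_proj blk i v = blk_proj blk i (C *v v)"
proof -
  have "(\<Sum>l\<in>UNIV. C $ k $ l * (if blk l = i then v $ l else 0)) =
        (if blk k = i then (\<Sum>l\<in>UNIV. C $ k $ l * v $ l) else 0)" for k
  proof (cases "blk k = i")
    case True
    then show ?thesis using assms by (simp, intro sum.cong) (auto simp: block_diag_def)
  next
    case False
    then show ?thesis using assms by (simp, intro sum.neutral) (auto simp: block_diag_def)
  qed
  then show ?thesis by (simp add: blk_proj_def matrix_vector_mult_def vec_eq_iff)
qed

lemma blockdiag_transpose: "block_diag blk C \<Longrightarrow> block_diag blk (transpose C)"
  by (simp add: block_diag_def transpose_def)

lemma matrix_inv_props: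
  fixes C :: "real^'k::finite^'k"
  assumes "invertible C"
  shows "C ** matrix_inv C = mat 1" "matrix_inv C ** C = mat 1"
proof -
  have "\<exists>A'. C ** A' = mat 1 \<and> A' ** C = mat 1" using assms by (simp add: invertible_def)
  then have "C ** matrix_inv C = mat 1 \<and> matrix_inv C ** C = mat 1"
    unfolding matrix_inv_def by (rule someI_ex)
  then show "C ** matrix_inv C = mat 1" "matrix_inv C ** C = mat 1" by auto
qed

lemma inv_commute:
  fixes C :: "real^'k::finite^'k"
  assumes "block_diag blk C" "invertible C"
  shows "matrix_inv C *v blk_proj blk i v = blk_proj blk i (matrix_inv C *v v)"
proof -
  let ?D = "matrix_inv C"
  have "?D *v blk_proj blk i v = ?D *v blk_proj blk i (C *v (?D *v v))"
    by (simp add: matrix_vector_mul_assoc matrix_inv_props[OF assms(2)])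
  also have "\<dots> = ?D *v (C *v blk_proj blk i (?D *v v))"
    by (simp add: blockdiag_commute[OF assms(1)])
  also have "\<dots> = blk_proj blk i (?D *v v)"
    by (simp add: matrix_vector_mul_assoc matrix_inv_props[OF assms(2)])
  finally show ?thesis .
qed

lemma mv_bound:
  fixes A :: "real^'n::finite^'m::finite"
  assumes "\<And>k l. \<bar>A$k$l\<bar> \<le> M"
  shows "norm (A *v x) \<le> (real CARD('m) * real CARD('n) * M) * norm x"
proof -
  have c: "\<bar>(A *v x) $ k\<bar> \<le> real CARD('n) * M * norm x" for k
  proof -
    have "\<bar>(A *v x) $ k\<bar> \<le> (\<Sum>l\<in>UNIV. \<bar>A$k$l * x$l\<bar>)"
      by (simp add: matrix_vector_mult_def sum_abs)
    also have "\<dots> \<le> (\<Sum>l\<in>(UNIV::'n set). M * norm x)"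
    proof (intro sum_mono)
      fix l
      have "\<bar>A$k$l\<bar> * \<bar>x$l\<bar> \<le> M * norm x"
        by (intro mult_mono assms component_le_norm_cart) (auto intro: order_trans[OF abs_ge_zero assms])
      then show "\<bar>A$k$l * x$l\<bar> \<le> M * norm x" by (simp add: abs_mult)
    qed
    finally show ?thesis by simp
  qed
  have "norm (A *v x) \<le> (\<Sum>k\<in>UNIV. \<bar>(A *v x) $ k\<bar>)" by (rule norm_le_l1_cart)
  also have "\<dots> \<le> (\<Sum>k\<in>(UNIV::'m set). real CARD('n) * M * norm x)" by (intro sum_mono c)
  finally show ?thesis by simp
qed

definition symm :: "real^'k^'k \<Rightarrow> real^'k^'k" where
  "symm A = inverse 2 *\<^sub>R (A + transpose A)"

lemma symm_mv: "symm A *v y = inverse 2 *\<^sub>R (A *v y + transpose A *v y)"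
  for A :: "real^'k::finite^'k"
  by (simp add: symm_def scaleR_matrix_vector_assoc[symmetric] matrix_vector_mult_add_rdistrib)

lemma symm_quad: "u \<bullet> (symm A *v u) = u \<bullet> (A *v u)"
  for A :: "real^'k::finite^'k"
proof -
  have "u \<bullet> (transpose A *v u) = u \<bullet> (A *v u)"
    by (metis inner_commute inner_transpose)
  then show ?thesis by (simp add: symm_mv inner_add_right)
qed

lemma symm_sym: "x \<bullet> (symm A *v y) = y \<bullet> (symm A *v x)"
  for A :: "real^'k::finite^'k"
proof -
  have "x \<bullet> (transpose A *v y) = y \<bullet> (A *v x)"
    by (metis inner_commute inner_transpose)
  moreover have "x \<bullet> (A *v y) = y \<bullet> (transpose A *v x)"
    by (metis inner_commute inner_transpose)
  ultimately show ?thesis by (simp add: symm_mv inner_add_right)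
qed

lemma block_sym_eigs_alt:
  "block_sym_eigs blk A i = {mu. \<exists>v. v \<in> blk_space blk i \<and> v \<noteq> 0 \<and> blk_proj blk i (symm A *v v) = mu *\<^sub>R v}"
  by (simp add: block_sym_eigs_def symm_def)

lemma eig_ge:
  fixes A :: "real^'k::finite^'k"
  assumes "mu \<in> block_sym_eigs blk A i"
  shows "\<exists>v. v \<in> blk_space blk i \<and> v \<noteq> 0 \<and> v \<bullet> (A *v v) = mu * (v \<bullet> v)"
proof -
  obtain v where v: "v \<in> blk_space blk i" "v \<noteq> 0" "blk_proj blk i (symm A *v v) = mu *\<^sub>R v"
    using assms by (auto simp: block_sym_eigs_alt)
  have "v \<bullet> (A *v v) = v \<bullet> (symm A *v v)" by (simp add: symm_quad)
  also have "\<dots> = v \<bullet> blk_proj blk i (symm A *v v)" using inner_blk_space[OF v(1)] by simp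
  also have "\<dots> = mu * (v \<bullet> v)" using v(3) by simp
  finally show ?thesis using v by blast
qed

lemma eigs_finite:
  fixes A :: "real^'k::finite^'k"
  shows "finite (block_sym_eigs blk A i)"
proof -
  let ?E = "block_sym_eigs blk A i"
  define e where "e mu = (SOME v. v \<in> blk_space blk i \<and> v \<noteq> 0 \<and> blk_proj blk i (symm A *v v) = mu *\<^sub>R v)" for mu
  have e: "e mu \<in> blk_space blk i \<and> e mu \<noteq> 0 \<and> blk_proj blk i (symm A *v e mu) = mu *\<^sub>R e mu" if "mu \<in> ?E" for mu
    unfolding e_def using that by (simp add: block_sym_eigs_alt) (rule someI_ex, blast)
  have orth: "e m1 \<bullet> e m2 = 0" if "m1 \<in> ?E" "m2 \<in> ?E" "m1 \<noteq> m2" for m1 m2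
  proof -
    have "m1 * (e m1 \<bullet> e m2) = (m1 *\<^sub>R e m1) \<bullet> e m2" by simp
    also have "\<dots> = blk_proj blk i (symm A *v e m1) \<bullet> e m2" using e[OF that(1)] by simp
    also have "\<dots> = e m2 \<bullet> blk_proj blk i (symm A *v e m1)" by (simp add: inner_commute)
    also have "\<dots> = e m2 \<bullet> (symm A *v e m1)" using inner_blk_space e[OF that(2)] by metis
    also have "\<dots> = e m1 \<bullet> (symm A *v e m2)" by (rule symm_sym)
    also have "\<dots> = e m1 \<bullet> blk_proj blk i (symm A *v e m2)" using inner_blk_space e[OF that(1)] by metis
    also have "\<dots> = m2 * (e m1 \<bullet> e m2)" using e[OF that(2)] by simp
    finally have "(m1 - m2) * (e m1 \<bullet> e m2) = 0" by (simp add: algebra_simps)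
    then show ?thesis using that by simp
  qed
  have inj: "inj_on e ?E"
  proof (rule inj_onI)
    fix m1 m2 assume m: "m1 \<in> ?E" "m2 \<in> ?E" "e m1 = e m2"
    show "m1 = m2"
    proof (rule ccontr)
      assume "m1 \<noteq> m2"
      then have "e m1 \<bullet> e m1 = 0" using orth[OF m(1,2)] m(3) by simp
      then show False using e[OF m(1)] by simp
    qed
  qed
  have "pairwise orthogonal (e ` ?E)"
    unfolding pairwise_def orthogonal_def using orth by auto
  moreover have "0 \<notin> e ` ?E" using e by force
  ultimately have "independent (e ` ?E)" by (rule pairwise_orthogonal_independent)
  then have "finite (e ` ?E)" by (rule independent_imp_finite)
  then show ?thesis using inj finite_imageD by blast
qed

lemma rayleigh:
  fixes A :: "real^'k::finite^'k" and blk :: "'k \<Rightarrow> 'p"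
  assumes ne: "blk k0 = i"
  shows "\<exists>v. v \<in> blk_space blk i \<and> norm v = 1 \<and> block_lambda_least blk A i = v \<bullet> (A *v v)
     \<and> (\<forall>u\<in>blk_space blk i. u \<bullet> (A *v u) \<ge> block_lambda_least blk A i * (norm u)^2)"
proof -
  let ?W = "blk_space blk i"
  let ?K = "?W \<inter> sphere 0 1"
  let ?q = "\<lambda>u. u \<bullet> (A *v u)"
  have "compact ?K"
    by (intro closed_Int_compact blk_space_closed compact_sphere)
  moreover have "axis k0 1 \<in> ?K" using ne unfolding sphere_def dist_0_norm norm_axis_1 mem_Collect_eq Int_iff
    by (auto simp: blk_space_def axis_def)
  then have "?K \<noteq> {}" by blast
  moreover have "continuous_on ?K ?q"
    by (intro continuous_intros linear_continuous_on matrix_vector_mul_bounded_linear)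
  ultimately have "\<exists>v\<in>?K. \<forall>y\<in>?K. ?q v \<le> ?q y" by (rule continuous_attains_inf)
  then obtain v where v: "v \<in> ?K" and vmin: "\<And>y. y \<in> ?K \<Longrightarrow> ?q v \<le> ?q y"
    by blast
  define m where "m = ?q v"
  have vW: "v \<in> ?W" and vn: "norm v = 1" using v by auto
  have vv: "v \<bullet> v = 1" using vn by (simp add: norm_eq_1)
  have quad: "?q u \<ge> m * (norm u)^2" if u: "u \<in> ?W" for u
  proof (cases "u = 0")
    case True then show ?thesis by simp
  next
    case False
    let ?u = "inverse (norm u) *\<^sub>R u"
    have "?u \<in> ?W" by (rule subspace_scale[OF blk_space_subspace u])
    then have "?u \<in> ?K" using False by simp
    then have "m \<le> ?q ?u" unfolding m_def by (rule vmin)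
    also have "?q ?u = inverse (norm u)^2 * ?q u"
      by (simp add: matrix_vector_mult_scaleR power2_eq_square)
    finally have "m \<le> inverse (norm u)^2 * ?q u" .
    then have "m * (norm u)^2 \<le> inverse (norm u)^2 * ?q u * (norm u)^2"
      by (simp add: mult_right_mono)
    also have "\<dots> = ?q u" using False by (simp add: field_simps)
    finally show ?thesis .
  qed
  define w where "w = blk_proj blk i (symm A *v v) - m *\<^sub>R v"
  have wW: "w \<in> ?W"
    unfolding w_def using blk_space_subspace vW blk_proj_in
    by (metis subspace_diff subspace_scale)
  have wsv: "w \<bullet> (symm A *v v) = w \<bullet> w + m * (w \<bullet> v)"
  proof -
    have "w \<bullet> (symm A *v v) = w \<bullet> blk_proj blk i (symm A *v v)" using inner_blk_space[OF wW] by simp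
    also have "blk_proj blk i (symm A *v v) = w + m *\<^sub>R v" by (simp add: w_def)
    finally show ?thesis by (simp add: inner_add_right)
  qed
  have w0: "w = 0"
  proof (rule ccontr)
    assume wne: "w \<noteq> 0"
    define K0 where "K0 = ?q w - m * (w \<bullet> w)"
    define t where "t = - (w \<bullet> w) / (\<bar>K0\<bar> + 1)"
    have ww: "w \<bullet> w > 0" using wne by simp
    have tneg: "t < 0" using ww by (simp add: t_def divide_pos_pos)
    have "v + t *\<^sub>R w \<in> ?W" using vW wW blk_space_subspace by (metis subspace_add subspace_scale)
    then have "?q (v + t *\<^sub>R w) \<ge> m * (norm (v + t *\<^sub>R w))^2" by (rule quad)
    moreover have "?q (v + t *\<^sub>R w) = m + t * (v \<bullet> (A *v w) + w \<bullet> (A *v v)) + t^2 * ?q w"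
      by (simp add: m_def matrix_vector_right_distrib matrix_vector_mult_scaleR inner_add_left inner_add_right power2_eq_square algebra_simps)
    moreover have "v \<bullet> (A *v w) + w \<bullet> (A *v v) = 2 * (w \<bullet> (symm A *v v))"
    proof -
      have "v \<bullet> (A *v w) = w \<bullet> (transpose A *v v)" by (metis inner_commute inner_transpose)
      then show ?thesis by (simp add: symm_mv inner_add_right)
    qed
    moreover have "(norm (v + t *\<^sub>R w))^2 = 1 + 2 * t * (w \<bullet> v) + t^2 * (w \<bullet> w)"
      unfolding power2_norm_eq_inner by (simp add: inner_add_left inner_add_right vv inner_commute power2_eq_square algebra_simps)
    ultimately have "m + t * (2 * (w \<bullet> w + m * (w \<bullet> v))) + t^2 * ?q w \<ge> m * (1 + 2 * t * (w \<bullet> v) + t^2 * (w \<bullet> w))"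
      using wsv by simp
    then have "t * (2 * (w \<bullet> w) + t * K0) \<ge> 0"
      by (simp add: K0_def power2_eq_square algebra_simps)
    then have h: "2 * (w \<bullet> w) + t * K0 \<le> 0" using tneg by (auto simp: zero_le_mult_iff)
    have "\<bar>t * K0\<bar> \<le> w \<bullet> w"
    proof -
      have "\<bar>t * K0\<bar> = (w \<bullet> w) * (\<bar>K0\<bar> / (\<bar>K0\<bar> + 1))"
        using ww by (simp add: t_def abs_mult abs_divide)
      also have "\<dots> \<le> (w \<bullet> w) * 1" using ww by (intro mult_left_mono) auto
      finally show ?thesis by simp
    qed
    then show False using h ww by linarith
  qed
  have mE: "m \<in> block_sym_eigs blk A i"
    unfolding block_sym_eigs_alt using vW vn w0 by (auto simp: w_def intro!: exI[of _ v])
  have lam: "block_lambda_least blk A i = m"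
    unfolding block_lambda_least_def
  proof (rule Min_eqI[OF eigs_finite _ mE])
    fix mu assume "mu \<in> block_sym_eigs blk A i"
    then obtain x where x: "x \<in> ?W" "x \<noteq> 0" "?q x = mu * (x \<bullet> x)" using eig_ge[of mu blk A i] by blast
    have "m * (x \<bullet> x) \<le> mu * (x \<bullet> x)" using quad[OF x(1)] x(3) by (simp add: power2_norm_eq_inner)
    then show "m \<le> mu" using x(2) by simp
  qed
  show ?thesis using vW vn quad lam m_def by auto
qed

locale nep =
  fixes blk :: "'k::finite \<Rightarrow> 'p::finite"
    and Qs :: "'p \<Rightarrow> (real^'k) set"
    and f :: "'p \<Rightarrow> real^'k \<Rightarrow> real"
    and grad :: "'p \<Rightarrow> real^'k \<Rightarrow> real^'k"
    and hess :: "'p \<Rightarrow> real^'k \<Rightarrow> real^'k^'k"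
    and U :: "(real^'k) set"
    and C :: "real^'k^'k"
  assumes blocks_nonempty: "surj blk"
    and Q_sub: "\<And>i. Qs i \<subseteq> blk_space blk i"
    and Q_ne: "\<And>i. Qs i \<noteq> {}"
    and Q_closed: "\<And>i. closed (Qs i)"
    and Q_convex: "\<And>i. convex (Qs i)"
    and U_open: "open U"
    and Q_U: "prod_set blk Qs \<subseteq> U"
    and f_deriv: "\<And>i x. x \<in> U \<Longrightarrow> (f i has_derivative (\<lambda>h. grad i x \<bullet> h)) (at x)"
    and grad_deriv: "\<And>i x. x \<in> U \<Longrightarrow> (grad i has_derivative (\<lambda>h. hess i x *v h)) (at x)"
    and hess_cont: "\<And>i. continuous_on U (hess i)"
    and hess_bdd: "\<And>i. bounded (hess i ` prod_set blk Qs)"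
    and f_convex: "\<And>i x. x \<in> prod_set blk Qs \<Longrightarrow> convex_on (Qs i) (\<lambda>y. f i (blk_upd blk x i y))"
    and C_blockdiag: "block_diag blk C"
    and C_invertible: "invertible C"
begin

abbreviation "Q \<equiv> prod_set blk Qs"
abbreviation "P \<equiv> blk_proj blk"
abbreviation "D \<equiv> matrix_inv C"
abbreviation "S \<equiv> scaled_jac blk C hess"

lemma Qs_proj: "y \<in> Qs i \<Longrightarrow> P i y = y"
  by (metis Q_sub blk_space_iff subsetD)
lemma Q_iff: "x \<in> Q \<longleftrightarrow> (\<forall>i. P i x \<in> Qs i)"
  by (simp add: prod_set_def)

lemma proj_upd: "P j (blk_upd blk x i y) = (if j = i then P i y else P j x)"
  by (simp add: blk_upd_eq blk_proj_add blk_proj_diff blk_proj_proj)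

lemma upd_Q: "x \<in> Q \<Longrightarrow> y \<in> Qs i \<Longrightarrow> blk_upd blk x i y \<in> Q"
  by (auto simp: Q_iff proj_upd Qs_proj)

lemma Q_convex_set: "convex Q"
  unfolding convex_def
proof (intro ballI allI impI)
  fix x y :: "real^'k" and u v :: real
  assume xy: "x \<in> Q" "y \<in> Q" and uv: "0 \<le> u" "0 \<le> v" "u + v = 1"
  show "u *\<^sub>R x + v *\<^sub>R y \<in> Q"
    unfolding Q_iff
  proof
    fix j
    have "P j (u *\<^sub>R x + v *\<^sub>R y) = u *\<^sub>R P j x + v *\<^sub>R P j y"
      by (simp add: blk_proj_add blk_proj_scaleR)
    also have "\<dots> \<in> Qs j" using xy uv Q_convex[of j] by (auto simp: Q_iff convex_def)
    finally show "P j (u *\<^sub>R x + v *\<^sub>R y) \<in> Qs j" .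
  qed
qed

lemma Q_nonempty: "Q \<noteq> {}"
proof -
  have "\<forall>i. \<exists>y. y \<in> Qs i" using Q_ne by blast
  then obtain q where q: "\<And>i. q i \<in> Qs i" by metis
  let ?x = "\<Sum>i\<in>UNIV. q i"
  have "P j ?x = q j" for j
  proof -
    have "P j ?x = (\<Sum>i\<in>UNIV. P j (q i))" by (simp add: blk_proj_sum)
    also have "\<dots> = (\<Sum>i\<in>UNIV. if i = j then q j else 0)"
    proof (intro sum.cong refl)
      fix i
      have "P j (q i) = P j (P i (q i))" using Qs_proj[OF q[of i]] by simp
      then show "P j (q i) = (if i = j then q j else 0)"
        using Qs_proj[OF q[of j]] by (auto simp: blk_proj_proj)
    qed
    finally show ?thesis by simp
  qed
  then have "?x \<in> Q" using q by (simp add: Q_iff)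
  then show ?thesis by blast
qed

lemma seg_Q: "P0 \<in> Q \<Longrightarrow> P1 \<in> Q \<Longrightarrow> 0 \<le> t \<Longrightarrow> t \<le> 1 \<Longrightarrow> P0 + t *\<^sub>R (P1 - P0) \<in> Q"
proof -
  assume a: "P0 \<in> Q" "P1 \<in> Q" "0 \<le> t" "t \<le> 1"
  have "P0 + t *\<^sub>R (P1 - P0) = (1 - t) *\<^sub>R P0 + t *\<^sub>R P1" by (simp add: algebra_simps)
  then show ?thesis using a Q_convex_set by (simp add: convex_def)
qed

lemma C_D: "C *v (D *v v) = v" "D *v (C *v v) = v"
  by (simp_all add: matrix_vector_mul_assoc matrix_inv_props[OF C_invertible])

lemma D_proj: "D *v P i v = P i (D *v v)"
  by (rule inv_commute[OF C_blockdiag C_invertible])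

end

context nep begin

lemma hess_entry_bound: "\<exists>B. \<forall>z\<in>Q. \<forall>i k l. \<bar>hess i z $ k $ l\<bar> \<le> B"
proof -
  have "\<forall>i. \<exists>B. \<forall>z\<in>Q. norm (hess i z) \<le> B"
    using hess_bdd by (auto simp: bounded_iff)
  then obtain B where B: "\<And>i z. z \<in> Q \<Longrightarrow> norm (hess i z) \<le> B i" by metis
  define Bt where "Bt = (\<Sum>i\<in>UNIV. \<bar>B i\<bar>)"
  have "\<bar>hess i z $ k $ l\<bar> \<le> Bt" if "z \<in> Q" for i z k l
  proof -
    have "\<bar>hess i z $ k $ l\<bar> \<le> norm (hess i z $ k)" by (metis component_le_norm_cart real_norm_def)
    also have "\<dots> \<le> norm (hess i z)" by (rule Finite_Cartesian_Product.norm_nth_le)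
    also have "\<dots> \<le> B i" using B that by blast
    also have "\<dots> \<le> \<bar>B i\<bar>" by simp
    also have "\<dots> \<le> Bt" unfolding Bt_def by (rule member_le_sum) auto
    finally show ?thesis .
  qed
  then show ?thesis by blast
qed

lemma S_bound: "\<exists>L. \<forall>z\<in>Q. \<forall>v. norm (S z *v v) \<le> L * norm v"
proof -
  obtain B where B: "\<And>z i k l. z \<in> Q \<Longrightarrow> \<bar>hess i z $ k $ l\<bar> \<le> B" using hess_entry_bound by blast
  define cC where "cC = (\<Sum>k\<in>UNIV. \<Sum>l\<in>UNIV. \<bar>C $ k $ l\<bar>)"
  have cC: "\<bar>C $ k $ l\<bar> \<le> cC" for k l
  proof -
    have "\<bar>C $ k $ l\<bar> \<le> (\<Sum>l\<in>UNIV. \<bar>C $ k $ l\<bar>)" by (rule member_le_sum) auto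
    also have "\<dots> \<le> cC" unfolding cC_def by (rule member_le_sum[of k]) (auto intro: sum_nonneg)
    finally show ?thesis .
  qed
  have cCt: "\<bar>transpose C $ k $ l\<bar> \<le> cC" for k l using cC by (simp add: transpose_def)
  define N where "N = real CARD('k) * real CARD('k)"
  have N0: "N \<ge> 0" by (simp add: N_def)
  have B0: "B \<ge> 0" using B Q_nonempty by (meson abs_ge_zero equals0I order_trans)
  have cC0: "cC \<ge> 0" using cC by (meson abs_ge_zero order_trans)
  have "norm (S z *v v) \<le> (N * cC * (N * B * (N * cC))) * norm v" if z: "z \<in> Q" for z v
  proof -
    have J: "\<bar>jac_F blk hess z $ k $ l\<bar> \<le> B" for k l using B[OF z] by (simp add: jac_F_def)
    have "S z *v v = transpose C *v (jac_F blk hess z *v (C *v v))"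
      by (simp add: scaled_jac_def matrix_vector_mul_assoc matrix_mul_assoc)
    then have "norm (S z *v v) = norm (transpose C *v (jac_F blk hess z *v (C *v v)))" by simp
    also have "\<dots> \<le> (N * cC) * norm (jac_F blk hess z *v (C *v v))"
      unfolding N_def by (rule mv_bound[OF cCt])
    also have "\<dots> \<le> (N * cC) * ((N * B) * norm (C *v v))"
      using N0 cC0 by (intro mult_left_mono) (auto simp: N_def intro: mv_bound[OF J])
    also have "\<dots> \<le> (N * cC) * ((N * B) * ((N * cC) * norm v))"
      using N0 cC0 B0 by (intro mult_left_mono) (auto simp: N_def intro: mv_bound[OF cC])
    finally show ?thesis by (simp add: mult.assoc)
  qed
  then show ?thesis by blast
qed

end

context nep begin

definition "Lb = (SOME L. L \<ge> 0 \<and> (\<forall>z\<in>Q. \<forall>v. norm (S z *v v) \<le> L * norm v))"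

lemma Lb: "Lb \<ge> 0" "z \<in> Q \<Longrightarrow> norm (S z *v v) \<le> Lb * norm v"
proof -
  obtain L0 where L0: "\<forall>z\<in>Q. \<forall>v. norm (S z *v v) \<le> L0 * norm v" using S_bound by blast
  have "max L0 0 \<ge> 0 \<and> (\<forall>z\<in>Q. \<forall>v. norm (S z *v v) \<le> max L0 0 * norm v)"
    using L0 by (auto intro: order_trans[OF _ mult_right_mono[OF max.cobounded1]])
  then have "Lb \<ge> 0 \<and> (\<forall>z\<in>Q. \<forall>v. norm (S z *v v) \<le> Lb * norm v)"
    unfolding Lb_def by (rule someI)
  then show "Lb \<ge> 0" "z \<in> Q \<Longrightarrow> norm (S z *v v) \<le> Lb * norm v" by auto
qed

lemma ex_k0: "\<exists>k0. blk k0 = i" using blocks_nonempty by (metis surjD)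

lemma lam_lower: "z \<in> Q \<Longrightarrow> block_lambda_least blk (S z) i \<ge> - Lb"
proof -
  assume z: "z \<in> Q"
  obtain k0 where "blk k0 = i" using ex_k0 by blast
  from rayleigh[of blk k0 i "S z", OF this] obtain v where v: "norm v = 1"
    "block_lambda_least blk (S z) i = v \<bullet> (S z *v v)" by blast
  have "\<bar>v \<bullet> (S z *v v)\<bar> \<le> norm v * norm (S z *v v)" by (rule Cauchy_Schwarz_ineq2)
  also have "\<dots> \<le> Lb" using Lb(2)[OF z, of v] v by simp
  finally show ?thesis using v by linarith
qed

lemma bdd_lam: "bdd_below ((\<lambda>z. block_lambda_least blk (S z) i) ` Q)"
  using lam_lower by (intro bdd_belowI2[where m="- Lb"]) auto

lemma alpha_le: "z \<in> Q \<Longrightarrow> alpha_min blk C hess Q i \<le> block_lambda_least blk (S z) i"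
  unfolding alpha_min_def by (rule cINF_lower[OF bdd_lam])

lemma quad_alpha:
  assumes z: "z \<in> Q" and u: "u \<in> blk_space blk i"
  shows "u \<bullet> (S z *v u) \<ge> alpha_min blk C hess Q i * (norm u)^2"
proof -
  obtain k0 where "blk k0 = i" using ex_k0 by blast
  from rayleigh[of blk k0 i "S z", OF this] u
  have "u \<bullet> (S z *v u) \<ge> block_lambda_least blk (S z) i * (norm u)^2" by blast
  moreover have "alpha_min blk C hess Q i * (norm u)^2 \<le> block_lambda_least blk (S z) i * (norm u)^2"
    using alpha_le[OF z] by (intro mult_right_mono) auto
  ultimately show ?thesis by linarith
qed

lemma bl_blockmap: "bounded_linear (\<lambda>v. P i (S z *v P j v))"
proof -
  have "bounded_linear (\<lambda>v. S z *v P j v)"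
    by (rule bounded_linear_compose[OF matrix_vector_mul_bounded_linear bl_blk_proj])
  then show ?thesis by (rule bounded_linear_compose[OF bl_blk_proj])
qed

lemma bn2_le: assumes z: "z \<in> Q" shows "block_norm2 blk (S z) i j \<le> Lb"
  unfolding block_norm2_def
proof (rule onorm_le)
  fix v
  have "norm (P i (S z *v P j v)) \<le> norm (S z *v P j v)" by (rule norm_blk_proj_le)
  also have "\<dots> \<le> Lb * norm (P j v)" by (rule Lb(2)[OF z])
  also have "\<dots> \<le> Lb * norm v" using Lb(1) norm_blk_proj_le by (intro mult_left_mono) auto
  finally show "norm (P i (S z *v P j v)) \<le> Lb * norm v" .
qed

lemma bdd_bn2: "bdd_above ((\<lambda>z. block_norm2 blk (S z) i j) ` Q)"
  using bn2_le by (intro bdd_aboveI2[where M=Lb]) auto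

lemma beta_ge: "z \<in> Q \<Longrightarrow> block_norm2 blk (S z) i j \<le> beta_max blk C hess Q i j"
  unfolding beta_max_def by (rule cSUP_upper[OF _ bdd_bn2])

lemma beta_nonneg: "beta_max blk C hess Q i j \<ge> 0"
proof -
  obtain z where z: "z \<in> Q" using Q_nonempty by blast
  have "0 \<le> block_norm2 blk (S z) i j" unfolding block_norm2_def by (rule onorm_pos_le[OF bl_blockmap])
  also have "\<dots> \<le> beta_max blk C hess Q i j" by (rule beta_ge[OF z])
  finally show ?thesis .
qed

lemma cross_beta:
  assumes z: "z \<in> Q" and u: "u \<in> blk_space blk i" and v: "v \<in> blk_space blk j"
  shows "\<bar>u \<bullet> (S z *v v)\<bar> \<le> beta_max blk C hess Q i j * norm u * norm v"
proof -
  have "u \<bullet> (S z *v v) = u \<bullet> P i (S z *v P j v)"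
    using inner_blk_space[OF u] v blk_space_iff by metis
  then have h1: "\<bar>u \<bullet> (S z *v v)\<bar> \<le> norm u * norm (P i (S z *v P j v))"
    by (simp add: Cauchy_Schwarz_ineq2)
  have "norm (P i (S z *v P j v)) \<le> block_norm2 blk (S z) i j * norm v"
    unfolding block_norm2_def by (rule onorm[OF bl_blockmap])
  also have "\<dots> \<le> beta_max blk C hess Q i j * norm v"
    using beta_ge[OF z] by (intro mult_right_mono) auto
  finally have "norm u * norm (P i (S z *v P j v)) \<le> norm u * (beta_max blk C hess Q i j * norm v)"
    by (intro mult_left_mono) auto
  then show ?thesis using h1 by (simp add: mult_ac)
qed

end

context nep begin

lemma transfer:
  assumes d: "d \<in> blk_space blk i"
  shows "d \<bullet> (hess i z *v w) = (D *v d) \<bullet> (S z *v (D *v w))"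
proof -
  let ?J = "jac_F blk hess z"
  have p: "P i (hess i z *v w) = P i (?J *v w)"
    by (simp add: vec_eq_iff blk_proj_def matrix_vector_mult_def jac_F_def)
  have "d \<bullet> (hess i z *v w) = d \<bullet> P i (hess i z *v w)" using inner_blk_space[OF d] by simp
  also have "\<dots> = d \<bullet> (?J *v w)" using p inner_blk_space[OF d] by simp
  also have "\<dots> = (C *v (D *v d)) \<bullet> (?J *v (C *v (D *v w)))" by (simp add: C_D)
  also have "\<dots> = (D *v d) \<bullet> (transpose C *v (?J *v (C *v (D *v w))))" by (rule inner_transpose)
  also have "\<dots> = (D *v d) \<bullet> (S z *v (D *v w))"
    by (simp add: scaled_jac_def matrix_vector_mul_assoc matrix_mul_assoc)
  finally show ?thesis .
qed

lemma core_split: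
  assumes d: "d \<in> blk_space blk i"
  shows "d \<bullet> (hess i z *v w) = (\<Sum>j\<in>UNIV. (D *v d) \<bullet> (S z *v (D *v P j w)))"
proof -
  have "d \<bullet> (hess i z *v w) = (D *v d) \<bullet> (S z *v (D *v (\<Sum>j\<in>UNIV. P j w)))"
    using transfer[OF d] by (simp add: sum_blk_proj)
  also have "D *v (\<Sum>j\<in>UNIV. P j w) = (\<Sum>j\<in>UNIV. D *v P j w)"
    by (rule linear_sum[OF matrix_vector_mul_linear])
  also have "S z *v \<dots> = (\<Sum>j\<in>UNIV. S z *v (D *v P j w))"
    by (rule linear_sum[OF matrix_vector_mul_linear])
  finally show ?thesis by (simp add: inner_sum_right)
qed

lemma deriv_line_f:
  assumes "p0 + t *\<^sub>R h \<in> U"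
  shows "((\<lambda>s. f i (p0 + s *\<^sub>R h)) has_real_derivative (grad i (p0 + t *\<^sub>R h) \<bullet> h)) (at t)"
proof -
  have l: "((\<lambda>s. p0 + s *\<^sub>R h) has_derivative (\<lambda>s. s *\<^sub>R h)) (at t)"
    by (auto intro!: derivative_eq_intros)
  have "((\<lambda>s. f i (p0 + s *\<^sub>R h)) has_derivative (\<lambda>s. grad i (p0 + t *\<^sub>R h) \<bullet> (s *\<^sub>R h))) (at t)"
    by (rule has_derivative_compose[OF l f_deriv[OF assms]])
  then show ?thesis unfolding has_field_derivative_def
    by (rule has_derivative_eq_rhs) (simp add: fun_eq_iff mult.commute)
qed

lemma deriv_line_g:
  assumes "p0 + t *\<^sub>R h \<in> U"
  shows "((\<lambda>s. d \<bullet> grad i (p0 + s *\<^sub>R h)) has_real_derivative (d \<bullet> (hess i (p0 + t *\<^sub>R h) *v h))) (at t)"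
proof -
  have l: "((\<lambda>s. p0 + s *\<^sub>R h) has_derivative (\<lambda>s. s *\<^sub>R h)) (at t)"
    by (auto intro!: derivative_eq_intros)
  have "((\<lambda>s. grad i (p0 + s *\<^sub>R h)) has_derivative (\<lambda>s. hess i (p0 + t *\<^sub>R h) *v (s *\<^sub>R h))) (at t)"
    by (rule has_derivative_compose[OF l grad_deriv[OF assms]])
  then have "((\<lambda>s. d \<bullet> grad i (p0 + s *\<^sub>R h)) has_derivative (\<lambda>s. d \<bullet> (hess i (p0 + t *\<^sub>R h) *v (s *\<^sub>R h)))) (at t)"
    by (rule bounded_linear.has_derivative[OF bounded_linear_inner_right])
  then show ?thesis unfolding has_field_derivative_def
    by (rule has_derivative_eq_rhs) (simp add: fun_eq_iff mult.commute matrix_vector_mult_scaleR)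
qed

lemma mvt_grad:
  assumes P0: "P0 \<in> Q" and P1: "P1 \<in> Q"
  shows "\<exists>z\<in>Q. d \<bullet> (grad i P1 - grad i P0) = d \<bullet> (hess i z *v (P1 - P0))"
proof -
  let ?h = "P1 - P0"
  have "\<exists>t::real. 0 < t \<and> t < 1 \<and> (d \<bullet> grad i (P0 + 1 *\<^sub>R ?h) - d \<bullet> grad i (P0 + 0 *\<^sub>R ?h)
          = (1 - 0) * (d \<bullet> (hess i (P0 + t *\<^sub>R ?h) *v ?h)))"
  proof (rule MVT2)
    fix t :: real assume "0 \<le> t" "t \<le> 1"
    then have "P0 + t *\<^sub>R ?h \<in> U" using seg_Q[OF P0 P1] Q_U by blast
    then show "((\<lambda>s. d \<bullet> grad i (P0 + s *\<^sub>R ?h)) has_real_derivative (d \<bullet> (hess i (P0 + t *\<^sub>R ?h) *v ?h))) (at t)"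
      by (rule deriv_line_g)
  qed simp
  then obtain t where t: "0 < t" "t < 1"
    "d \<bullet> grad i P1 - d \<bullet> grad i P0 = d \<bullet> (hess i (P0 + t *\<^sub>R ?h) *v ?h)" by auto
  have "P0 + t *\<^sub>R ?h \<in> Q" using seg_Q[OF P0 P1] t by auto
  then show ?thesis using t by (auto simp: inner_diff_right)
qed

end

context nep begin

abbreviation "alpha i \<equiv> alpha_min blk C hess Q i"
abbreviation "beta i j \<equiv> beta_max blk C hess Q i j"

lemma upd_space: "a \<in> blk_space blk i \<Longrightarrow> blk_upd blk x i a = x - P i x + a"
  by (simp add: blk_upd_eq blk_space_iff)

lemma Qs_space: "a \<in> Qs i \<Longrightarrow> a \<in> blk_space blk i"
  using Q_sub by blast

lemma D_space: "d \<in> blk_space blk i \<Longrightarrow> D *v d \<in> blk_space blk i"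
  by (metis D_proj blk_proj_in blk_space_iff)

lemma C_bound: "\<exists>K>0. \<forall>v. norm (C *v v) \<le> K * norm v"
proof -
  define cC where "cC = (\<Sum>k\<in>UNIV. \<Sum>l\<in>UNIV. \<bar>C $ k $ l\<bar>)"
  have cC: "\<bar>C $ k $ l\<bar> \<le> cC" for k l
  proof -
    have "\<bar>C $ k $ l\<bar> \<le> (\<Sum>l\<in>UNIV. \<bar>C $ k $ l\<bar>)" by (rule member_le_sum) auto
    also have "\<dots> \<le> cC" unfolding cC_def by (rule member_le_sum[of k]) (auto intro: sum_nonneg)
    finally show ?thesis .
  qed
  define K where "K = max (real CARD('k) * real CARD('k) * cC) 1"
  have "norm (C *v v) \<le> K * norm v" for v
    using mv_bound[OF cC, of v] unfolding K_def
    by (meson max.cobounded1 mult_right_mono norm_ge_zero order_trans)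
  moreover have "K > 0" by (simp add: K_def)
  ultimately show ?thesis by blast
qed

lemma grad_mono:
  assumes x: "x \<in> Q" and a: "a \<in> Qs i" and b: "b \<in> Qs i"
  shows "(a - b) \<bullet> (grad i (blk_upd blk x i a) - grad i (blk_upd blk x i b)) \<ge> alpha i * (norm (D *v (a - b)))^2"
proof -
  let ?d = "a - b"
  have dS: "?d \<in> blk_space blk i"
    using Qs_space[OF a] Qs_space[OF b] blk_space_subspace by (metis subspace_diff)
  obtain z where z: "z \<in> Q" and e: "?d \<bullet> (grad i (blk_upd blk x i a) - grad i (blk_upd blk x i b))
      = ?d \<bullet> (hess i z *v (blk_upd blk x i a - blk_upd blk x i b))"
    using mvt_grad[OF upd_Q[OF x b] upd_Q[OF x a]] by blast
  have "blk_upd blk x i a - blk_upd blk x i b = ?d"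
    using upd_space[OF Qs_space[OF a]] upd_space[OF Qs_space[OF b]] by simp
  then have "?d \<bullet> (grad i (blk_upd blk x i a) - grad i (blk_upd blk x i b)) = (D *v ?d) \<bullet> (S z *v (D *v ?d))"
    using e transfer[OF dS] by simp
  also have "\<dots> \<ge> alpha i * (norm (D *v ?d))^2" by (rule quad_alpha[OF z D_space[OF dS]])
  finally show ?thesis .
qed

lemma grad_mono2:
  assumes al: "alpha i > 0"
  shows "\<exists>mu>0. \<forall>x\<in>Q. \<forall>a\<in>Qs i. \<forall>b\<in>Qs i.
     (a - b) \<bullet> (grad i (blk_upd blk x i a) - grad i (blk_upd blk x i b)) \<ge> mu * (norm (a - b))^2"
proof -
  obtain K where K: "K > 0" "\<And>v. norm (C *v v) \<le> K * norm v" using C_bound by blast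
  have nd: "norm d \<le> K * norm (D *v d)" for d using K(2)[of "D *v d"] by (simp add: C_D)
  have "alpha i / K^2 * (norm (a - b))^2 \<le> alpha i * (norm (D *v (a - b)))^2" for a b
  proof -
    have "norm (a - b) ^ 2 \<le> (K * norm (D *v (a - b)))^2"
      using nd[of "a - b"] by (intro power_mono) auto
    then have "(norm (a - b))^2 / K^2 \<le> (norm (D *v (a - b)))^2"
      using K(1) by (simp add: divide_le_eq power_mult_distrib mult.commute)
    then show ?thesis using al by (metis (no_types, opaque_lifting) mult_left_mono less_imp_le times_divide_eq_left times_divide_eq_right)
  qed
  note h = this
  show ?thesis
  proof (intro exI[of _ "alpha i / K^2"] conjI ballI)
    show "alpha i / K^2 > 0" using al K(1) by simp
    fix x a b assume "x \<in> Q" "a \<in> Qs i" "b \<in> Qs i"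
    from grad_mono[OF this] h[of a b]
    show "alpha i / K^2 * (norm (a - b))^2 \<le> (a - b) \<bullet> (grad i (blk_upd blk x i a) - grad i (blk_upd blk x i b))"
      by linarith
  qed
qed

lemma VI:
  assumes x: "x \<in> Q" and y: "is_best_resp blk f Qs x i y" and z: "z \<in> Qs i"
  shows "grad i (blk_upd blk x i y) \<bullet> (z - y) \<ge> 0"
proof (rule ccontr)
  assume neg: "\<not> ?thesis"
  have yQ: "y \<in> Qs i" and ymin: "\<And>w. w \<in> Qs i \<Longrightarrow> f i (blk_upd blk x i y) \<le> f i (blk_upd blk x i w)"
    using y by (auto simp: is_best_resp_def)
  let ?p = "blk_upd blk x i y"
  let ?h = "z - y"
  have pU: "?p + 0 *\<^sub>R ?h \<in> U" using upd_Q[OF x yQ] Q_U by auto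
  have "((\<lambda>s. f i (?p + s *\<^sub>R ?h)) has_real_derivative (grad i (?p + 0 *\<^sub>R ?h) \<bullet> ?h)) (at 0)"
    by (rule deriv_line_f[OF pU])
  moreover have "grad i (?p + 0 *\<^sub>R ?h) \<bullet> ?h < 0" using neg by simp
  ultimately obtain d where d: "d > 0" "\<And>t. t > 0 \<Longrightarrow> t < d \<Longrightarrow> f i (?p + 0 *\<^sub>R ?h) > f i (?p + (0 + t) *\<^sub>R ?h)"
    using DERIV_neg_dec_right by blast
  define t where "t = min (d / 2) 1"
  have t: "0 < t" "t < d" "t \<le> 1" using d by (auto simp: t_def)
  have "y + t *\<^sub>R ?h = (1 - t) *\<^sub>R y + t *\<^sub>R z" by (simp add: algebra_simps)
  also have "\<dots> \<in> Qs i" using Q_convex[of i] yQ z t by (simp add: convex_def)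
  finally have yt: "y + t *\<^sub>R ?h \<in> Qs i" .
  have "?p + t *\<^sub>R ?h = blk_upd blk x i (y + t *\<^sub>R ?h)"
    using upd_space[OF Qs_space[OF yQ]] upd_space[OF Qs_space[OF yt]] by simp
  then have "f i ?p \<le> f i (?p + t *\<^sub>R ?h)" using ymin[OF yt] by simp
  moreover have "f i ?p > f i (?p + t *\<^sub>R ?h)" using d(2)[OF t(1,2)] by simp
  ultimately show False by simp
qed

end

context nep begin

lemma growth:
  assumes x: "x \<in> Q" and y0: "y0 \<in> Qs i" and y: "y \<in> Qs i"
    and mu: "\<And>a b. a \<in> Qs i \<Longrightarrow> b \<in> Qs i \<Longrightarrow>
       (a - b) \<bullet> (grad i (blk_upd blk x i a) - grad i (blk_upd blk x i b)) \<ge> mu * (norm (a - b))^2"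
  shows "f i (blk_upd blk x i y) \<ge> f i (blk_upd blk x i y0) + grad i (blk_upd blk x i y0) \<bullet> (y - y0)
            + mu / 2 * (norm (y - y0))^2"
proof -
  let ?h = "y - y0"
  let ?p0 = "blk_upd blk x i y0"
  let ?G = "grad i ?p0"
  define n2 where "n2 = (norm ?h)^2"
  define psi where "psi s = f i (?p0 + s *\<^sub>R ?h) - s * (?G \<bullet> ?h) - mu / 2 * s^2 * n2" for s
  define psi' where "psi' s = grad i (?p0 + s *\<^sub>R ?h) \<bullet> ?h - ?G \<bullet> ?h - mu * s * n2" for s
  have seg: "y0 + s *\<^sub>R ?h \<in> Qs i" if "0 \<le> s" "s \<le> 1" for s
  proof -
    have "y0 + s *\<^sub>R ?h = (1 - s) *\<^sub>R y0 + s *\<^sub>R y" by (simp add: algebra_simps)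
    then show ?thesis using Q_convex[of i] y0 y that by (simp add: convex_def)
  qed
  have pseg: "?p0 + s *\<^sub>R ?h = blk_upd blk x i (y0 + s *\<^sub>R ?h)" if "0 \<le> s" "s \<le> 1" for s
    using upd_space[OF Qs_space[OF y0]] upd_space[OF Qs_space[OF seg[OF that]]] by simp
  have "\<exists>t::real. 0 < t \<and> t < 1 \<and> psi 1 - psi 0 = (1 - 0) * psi' t"
  proof (rule MVT2)
    fix s :: real assume s: "0 \<le> s" "s \<le> 1"
    have "?p0 + s *\<^sub>R ?h \<in> U" using pseg[OF s] upd_Q[OF x seg[OF s]] Q_U by auto
    then have d1: "((\<lambda>s. f i (?p0 + s *\<^sub>R ?h)) has_real_derivative (grad i (?p0 + s *\<^sub>R ?h) \<bullet> ?h)) (at s)"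
      by (rule deriv_line_f)
    have d2: "((\<lambda>s. s * (?G \<bullet> ?h)) has_real_derivative (?G \<bullet> ?h)) (at s)"
      by (auto intro!: derivative_eq_intros)
    have d3: "((\<lambda>s. mu / 2 * s^2 * n2) has_real_derivative (mu * s * n2)) (at s)"
      by (auto intro!: derivative_eq_intros)
    show "(psi has_real_derivative psi' s) (at s)"
      unfolding psi_def[abs_def] psi'_def by (rule DERIV_diff[OF DERIV_diff[OF d1 d2] d3])
  qed simp
  then obtain t where t: "0 < t" "t < 1" "psi 1 - psi 0 = psi' t" by auto
  have "psi' t \<ge> 0"
  proof -
    let ?a = "y0 + t *\<^sub>R ?h"
    have a: "?a \<in> Qs i" using seg t by auto
    have e1: "?a - y0 = t *\<^sub>R ?h" by simp
    have e2: "blk_upd blk x i ?a = ?p0 + t *\<^sub>R ?h" using pseg t by simp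
    have "(t *\<^sub>R ?h) \<bullet> (grad i (?p0 + t *\<^sub>R ?h) - ?G) \<ge> mu * (norm (t *\<^sub>R ?h))^2"
      using mu[OF a y0] by (simp only: e2 e1)
    moreover have "(norm (t *\<^sub>R ?h))^2 = t * (t * n2)" using t by (simp add: n2_def power_mult_distrib power2_eq_square)
    ultimately have "t * (?h \<bullet> (grad i (?p0 + t *\<^sub>R ?h) - ?G)) \<ge> t * (t * (mu * n2))"
      by (simp add: algebra_simps)
    then have "?h \<bullet> (grad i (?p0 + t *\<^sub>R ?h) - ?G) \<ge> t * (mu * n2)" using t by simp
    then show ?thesis by (simp add: psi'_def inner_diff_right inner_commute algebra_simps)
  qed
  then have "psi 1 \<ge> psi 0" using t by simp
  moreover have "?p0 + 1 *\<^sub>R ?h = blk_upd blk x i y" using pseg[of 1] by simp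
  ultimately show ?thesis by (simp add: psi_def n2_def inner_commute)
qed

lemma cont_g: "x \<in> Q \<Longrightarrow> continuous_on (Qs i) (\<lambda>y. f i (blk_upd blk x i y))"
proof (intro continuous_at_imp_continuous_on ballI)
  fix y assume x: "x \<in> Q" and y: "y \<in> Qs i"
  have eq: "(\<lambda>y. blk_upd blk x i y) = (\<lambda>y. x - P i x + P i y)" by (simp add: blk_upd_eq fun_eq_iff)
  have c1: "isCont (\<lambda>y. blk_upd blk x i y) y"
    unfolding eq by (intro continuous_intros linear_continuous_at bl_blk_proj)
  have "blk_upd blk x i y \<in> U" using upd_Q[OF x y] Q_U by auto
  then have "isCont (f i) (blk_upd blk x i y)" using f_deriv has_derivative_continuous by blast
  then show "isCont (\<lambda>y. f i (blk_upd blk x i y)) y" using c1 by (rule isCont_o2[rotated])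
qed

lemma exists_br:
  assumes x: "x \<in> Q" and al: "alpha i > 0"
  shows "\<exists>y. is_best_resp blk f Qs x i y"
proof -
  obtain mu where mu0: "mu > 0" and mu: "\<And>a b. a \<in> Qs i \<Longrightarrow> b \<in> Qs i \<Longrightarrow>
       (a - b) \<bullet> (grad i (blk_upd blk x i a) - grad i (blk_upd blk x i b)) \<ge> mu * (norm (a - b))^2"
    using grad_mono2[OF al] x by blast
  obtain y0 where y0: "y0 \<in> Qs i" using Q_ne by blast
  let ?g = "\<lambda>y. f i (blk_upd blk x i y)"
  let ?G = "grad i (blk_upd blk x i y0)"
  define R0 where "R0 = 2 * norm ?G / mu"
  let ?K = "Qs i \<inter> cball y0 R0"
  have "compact ?K" by (intro closed_Int_compact Q_closed compact_cball)
  moreover have "y0 \<in> ?K" using y0 mu0 by (simp add: R0_def)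
  then have "?K \<noteq> {}" by blast
  moreover have "continuous_on ?K ?g" using cont_g[OF x] by (rule continuous_on_subset) auto
  ultimately have "\<exists>ys\<in>?K. \<forall>w\<in>?K. ?g ys \<le> ?g w" by (rule continuous_attains_inf)
  then obtain ys where ys: "ys \<in> ?K" and ysmin: "\<And>w. w \<in> ?K \<Longrightarrow> ?g ys \<le> ?g w" by blast
  have "is_best_resp blk f Qs x i ys"
    unfolding is_best_resp_def
  proof (intro conjI ballI)
    show "ys \<in> Qs i" using ys by auto
    fix w assume w: "w \<in> Qs i"
    show "?g ys \<le> ?g w"
    proof (cases "w \<in> cball y0 R0")
      case True then show ?thesis using w ysmin by auto
    next
      case False
      define r where "r = norm (w - y0)"
      have "dist y0 w > R0" using False by simp
      then have rR: "r \<ge> R0" by (simp add: r_def dist_norm norm_minus_commute)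
      have "mu * r \<ge> 2 * norm ?G" using rR mu0 by (simp add: R0_def field_simps)
      then have "mu / 2 * r^2 \<ge> norm ?G * r"
      proof -
        have "2 * norm ?G * r \<le> mu * r * r" using \<open>mu * r \<ge> 2 * norm ?G\<close>
          by (rule mult_right_mono) (simp add: r_def)
        then show ?thesis by (simp add: power2_eq_square)
      qed
      moreover have "?G \<bullet> (w - y0) \<ge> - (norm ?G * r)"
        using Cauchy_Schwarz_ineq2[of ?G "w - y0"] by (simp add: r_def)
      moreover have "?g w \<ge> ?g y0 + ?G \<bullet> (w - y0) + mu / 2 * r^2"
        using growth[OF x y0 w mu] by (simp add: r_def)
      moreover have "?g ys \<le> ?g y0" using ysmin \<open>y0 \<in> ?K\<close> by blast
      ultimately show ?thesis by linarith
    qed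
  qed
  then show ?thesis by blast
qed

lemma unique_br:
  assumes x: "x \<in> Q" and al: "alpha i > 0"
    and y1: "is_best_resp blk f Qs x i y1" and y2: "is_best_resp blk f Qs x i y2"
  shows "y1 = y2"
proof -
  obtain mu where mu0: "mu > 0" and mu: "\<And>a b. a \<in> Qs i \<Longrightarrow> b \<in> Qs i \<Longrightarrow>
       (a - b) \<bullet> (grad i (blk_upd blk x i a) - grad i (blk_upd blk x i b)) \<ge> mu * (norm (a - b))^2"
    using grad_mono2[OF al] x by blast
  have q1: "y1 \<in> Qs i" and q2: "y2 \<in> Qs i" using y1 y2 by (auto simp: is_best_resp_def)
  have v1: "grad i (blk_upd blk x i y1) \<bullet> (y2 - y1) \<ge> 0" by (rule VI[OF x y1 q2])
  have v2: "grad i (blk_upd blk x i y2) \<bullet> (y1 - y2) \<ge> 0" by (rule VI[OF x y2 q1])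
  have "(y1 - y2) \<bullet> (grad i (blk_upd blk x i y1) - grad i (blk_upd blk x i y2)) \<le> 0"
    using v1 v2 by (simp add: inner_diff_left inner_diff_right inner_commute)
  with mu[OF q1 q2] mu0 have "(norm (y1 - y2))^2 \<le> 0"
    by (smt (verit) mult_pos_pos zero_less_power2 norm_ge_zero)
  then show ?thesis by simp
qed

end

lemma mv_neg: "A *v (- x) = - (A *v x)" for A :: "real^'n::finite^'m::finite"
  by (simp add: vec_eq_iff matrix_vector_mult_def sum_negf)

context nep begin

lemma Pj_space: "a \<in> blk_space blk i \<Longrightarrow> j \<noteq> i \<Longrightarrow> P j a = 0"
  by (metis blk_proj_proj blk_space_iff)

lemma contr:
  assumes x: "x \<in> Q" and y: "y \<in> Q"
    and a: "is_best_resp blk f Qs x i a" and b: "is_best_resp blk f Qs y i b"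
  shows "alpha i * norm (D *v (a - b)) \<le> (\<Sum>j\<in>UNIV-{i}. beta i j * norm (D *v P j (x - y)))"
proof -
  have qa: "a \<in> Qs i" and qb: "b \<in> Qs i" using a b by (auto simp: is_best_resp_def)
  let ?pa = "blk_upd blk x i a" and ?pb = "blk_upd blk y i b"
  let ?d = "a - b"
  let ?u = "D *v ?d"
  let ?w = "?pb - ?pa"
  have sa: "a \<in> blk_space blk i" and sb: "b \<in> blk_space blk i" using qa qb Qs_space by auto
  have dS: "?d \<in> blk_space blk i" using sa sb blk_space_subspace by (metis subspace_diff)
  have uS: "?u \<in> blk_space blk i" by (rule D_space[OF dS])
  have v1: "grad i ?pa \<bullet> (b - a) \<ge> 0" by (rule VI[OF x a qb])
  have v2: "grad i ?pb \<bullet> (a - b) \<ge> 0" by (rule VI[OF y b qa])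
  have h0: "?d \<bullet> (grad i ?pb - grad i ?pa) \<ge> 0"
    using v1 v2 by (simp add: inner_diff_left inner_diff_right inner_commute)
  obtain z where z: "z \<in> Q" and e: "?d \<bullet> (grad i ?pb - grad i ?pa) = ?d \<bullet> (hess i z *v ?w)"
    using mvt_grad[OF upd_Q[OF x qa] upd_Q[OF y qb]] by blast
  have Pw: "P j ?w = (if j = i then - ?d else P j (y - x))" for j
  proof (cases "j = i")
    case True
    then show ?thesis using sa sb
      by (simp add: upd_space blk_proj_diff blk_proj_add blk_proj_proj blk_space_iff)
  next
    case False
    then show ?thesis using Pj_space[OF sa False] Pj_space[OF sb False]
      by (simp add: upd_space[OF sa] upd_space[OF sb] blk_proj_diff blk_proj_add blk_proj_proj)
  qed
  define v where "v j = D *v P j (y - x)" for j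
  have vS: "v j \<in> blk_space blk j" for j unfolding v_def by (rule D_space[OF blk_proj_in])
  have nv: "norm (v j) = norm (D *v P j (x - y))" for j
  proof -
    have "P j (y - x) = - P j (x - y)" by (simp add: blk_proj_diff)
    then show ?thesis by (simp add: v_def mv_neg norm_minus_cancel)
  qed
  have "?d \<bullet> (hess i z *v ?w) = (\<Sum>j\<in>UNIV. ?u \<bullet> (S z *v (D *v P j ?w)))"
    by (rule core_split[OF dS])
  also have "\<dots> = ?u \<bullet> (S z *v (D *v P i ?w)) + (\<Sum>j\<in>UNIV-{i}. ?u \<bullet> (S z *v (D *v P j ?w)))"
    by (simp add: sum.remove)
  also have "(\<Sum>j\<in>UNIV-{i}. ?u \<bullet> (S z *v (D *v P j ?w))) = (\<Sum>j\<in>UNIV-{i}. ?u \<bullet> (S z *v v j))"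
    by (intro sum.cong) (auto simp: Pw v_def)
  also have "?u \<bullet> (S z *v (D *v P i ?w)) = - (?u \<bullet> (S z *v ?u))"
  proof -
    have "D *v P i ?w = - ?u" by (simp add: Pw mv_neg[symmetric])
    then show ?thesis by (simp add: mv_neg)
  qed
  finally have main: "0 \<le> - (?u \<bullet> (S z *v ?u)) + (\<Sum>j\<in>UNIV-{i}. ?u \<bullet> (S z *v v j))"
    using h0 e by simp
  have qa_: "?u \<bullet> (S z *v ?u) \<ge> alpha i * (norm ?u)^2" by (rule quad_alpha[OF z uS])
  have cb: "(\<Sum>j\<in>UNIV-{i}. ?u \<bullet> (S z *v v j)) \<le> (\<Sum>j\<in>UNIV-{i}. beta i j * norm ?u * norm (v j))"
  proof (rule sum_mono)
    fix j
    have "\<bar>?u \<bullet> (S z *v v j)\<bar> \<le> beta i j * norm ?u * norm (v j)" by (rule cross_beta[OF z uS vS])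
    then show "?u \<bullet> (S z *v v j) \<le> beta i j * norm ?u * norm (v j)" by linarith
  qed
  have key: "alpha i * (norm ?u)^2 \<le> norm ?u * (\<Sum>j\<in>UNIV-{i}. beta i j * norm (D *v P j (x - y)))"
    using main qa_ cb by (simp add: sum_distrib_left nv mult_ac)
  have rhs0: "0 \<le> (\<Sum>j\<in>UNIV-{i}. beta i j * norm (D *v P j (x - y)))"
    by (intro sum_nonneg mult_nonneg_nonneg beta_nonneg norm_ge_zero)
  show ?thesis
  proof (cases "norm ?u = 0")
    case True then show ?thesis using rhs0 by simp
  next
    case False
    then have "norm ?u > 0" by simp
    have "norm ?u * (alpha i * norm ?u) \<le> norm ?u * (\<Sum>j\<in>UNIV-{i}. beta i j * norm (D *v P j (x - y)))"
      using key by (simp add: power2_eq_square mult_ac)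
    then show ?thesis using \<open>norm ?u > 0\<close> by (rule mult_left_le_imp_le)
  qed
qed

end

context nep begin

definition "br i x = (THE y. is_best_resp blk f Qs x i y)"

lemma main_loc:
  assumes Pm: "P_matrix (Upsilon_F blk C hess Q)"
  shows "(\<forall>x\<in>Q. \<forall>i. \<exists>!y. is_best_resp blk f Qs x i y)
    \<and> (\<forall>x\<in>Q. best_resp blk f Qs x \<in> Q)
    \<and> (\<exists>c. (\<forall>i. c i > 0)
         \<and> weighted_inf_mat_norm c (Gamma_F blk C hess Q) < 1
         \<and> (\<forall>x\<in>Q. \<forall>y\<in>Q.
              block_vnorm blk C c (best_resp blk f Qs x - best_resp blk f Qs y)
                \<le> weighted_inf_mat_norm c (Gamma_F blk C hess Q) * block_vnorm blk C c (x - y)))"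
proof -
  let ?Y = "Upsilon_F blk C hess Q"
  let ?G = "Gamma_F blk C hess Q"
  have al: "alpha i > 0" for i
  proof -
    have "principal_minor ?Y {i} > 0" using Pm by (simp add: P_matrix_def)
    then show ?thesis unfolding principal_minor_def by (simp add: permutes_sing sign_id Upsilon_F_def)
  qed
  have ex1: "\<exists>!y. is_best_resp blk f Qs x i y" if "x \<in> Q" for x i
    using exists_br[OF that al] unique_br[OF that al] by blast
  have brp: "is_best_resp blk f Qs x i (br i x)" if "x \<in> Q" for x i
    unfolding br_def by (rule theI'[OF ex1[OF that]])
  have brQ: "br i x \<in> Qs i" if "x \<in> Q" for x i using brp[OF that] by (simp add: is_best_resp_def)
  have Pbest: "P j (best_resp blk f Qs x) = br j x" if x: "x \<in> Q" for x j
  proof -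
    have "best_resp blk f Qs x = (\<Sum>i\<in>UNIV. br i x)" by (simp add: best_resp_def br_def)
    then have "P j (best_resp blk f Qs x) = (\<Sum>i\<in>UNIV. P j (br i x))" by (simp add: blk_proj_sum)
    also have "\<dots> = (\<Sum>i\<in>UNIV. if i = j then br j x else 0)"
    proof (intro sum.cong refl)
      fix i
      have s: "br i x \<in> blk_space blk i" using Qs_space[OF brQ[OF x]] .
      show "P j (br i x) = (if i = j then br j x else 0)"
        using Pj_space[OF s, of j] s by (auto simp: blk_space_iff)
    qed
    finally show ?thesis by simp
  qed
  have bestQ: "best_resp blk f Qs x \<in> Q" if "x \<in> Q" for x
    using Pbest[OF that] brQ[OF that] by (simp add: Q_iff)
  obtain c where cpos: "\<And>i. c i > 0" and crow: "\<And>i. (\<Sum>j\<in>UNIV. ?Y$i$j * c j) > 0"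
    using mmatrix[of ?Y] Pm beta_nonneg by (auto simp: Upsilon_F_def)
  define row where "row i = (1 / c i) * (\<Sum>j\<in>UNIV. \<bar>?G $ i $ j\<bar> * c j)" for i
  define Gm where "Gm = weighted_inf_mat_norm c ?G"
  have Gm_def': "Gm = Max (range row)" by (simp add: Gm_def weighted_inf_mat_norm_def row_def)
  have rowsum: "(\<Sum>j\<in>UNIV. \<bar>?G $ i $ j\<bar> * c j) = (\<Sum>j\<in>UNIV-{i}. beta i j / alpha i * c j)" for i
  proof -
    have "(\<Sum>j\<in>UNIV. \<bar>?G $ i $ j\<bar> * c j) = \<bar>?G $ i $ i\<bar> * c i + (\<Sum>j\<in>UNIV-{i}. \<bar>?G $ i $ j\<bar> * c j)"
      by (simp add: sum.remove)
    also have "(\<Sum>j\<in>UNIV-{i}. \<bar>?G $ i $ j\<bar> * c j) = (\<Sum>j\<in>UNIV-{i}. beta i j / alpha i * c j)"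
      using al[of i] beta_nonneg by (intro sum.cong) (auto simp: Gamma_F_def)
    finally show ?thesis by (simp add: Gamma_F_def)
  qed
  have row_lt: "row i < 1" for i
  proof -
    have "(\<Sum>j\<in>UNIV. ?Y$i$j * c j) = alpha i * c i + (\<Sum>j\<in>UNIV-{i}. - beta i j * c j)"
    proof -
      have "(\<Sum>j\<in>UNIV. ?Y$i$j * c j) = ?Y$i$i * c i + (\<Sum>j\<in>UNIV-{i}. ?Y$i$j * c j)"
        by (simp add: sum.remove)
      also have "(\<Sum>j\<in>UNIV-{i}. ?Y$i$j * c j) = (\<Sum>j\<in>UNIV-{i}. - beta i j * c j)"
        by (intro sum.cong) (auto simp: Upsilon_F_def)
      finally show ?thesis by (simp add: Upsilon_F_def)
    qed
    then have "(\<Sum>j\<in>UNIV-{i}. beta i j * c j) < alpha i * c i"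
      using crow[of i] by (simp add: sum_negf)
    then have "(\<Sum>j\<in>UNIV-{i}. beta i j * c j) / alpha i < c i"
      using al[of i] by (simp add: divide_less_eq mult.commute)
    moreover have "(\<Sum>j\<in>UNIV-{i}. beta i j / alpha i * c j) = (\<Sum>j\<in>UNIV-{i}. beta i j * c j) / alpha i"
      by (simp add: sum_divide_distrib)
    moreover have "row i = (\<Sum>j\<in>UNIV-{i}. beta i j / alpha i * c j) / c i"
      by (simp add: row_def rowsum)
    ultimately show ?thesis using cpos[of i] al[of i] by (simp only:) (auto simp: divide_less_eq mult.commute)
  qed
  have Gm_lt: "Gm < 1" unfolding Gm_def' using row_lt by (simp add: Max_less_iff)
  have contraction: "block_vnorm blk C c (best_resp blk f Qs x - best_resp blk f Qs y) \<le> Gm * block_vnorm blk C c (x - y)"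
    if x: "x \<in> Q" and y: "y \<in> Q" for x y
  proof -
    define N where "N = block_vnorm blk C c (x - y)"
    have N_ge: "norm (D *v P j (x - y)) \<le> c j * N" for j
    proof -
      have "norm (D *v P j (x - y)) / c j \<le> N" unfolding N_def block_vnorm_def by (rule Max_ge) auto
      then show ?thesis using cpos[of j] by (simp add: divide_le_eq mult.commute)
    qed
    have N0: "N \<ge> 0" using N_ge[of undefined] cpos[of undefined]
      by (meson norm_ge_zero order_trans zero_le_mult_iff not_le)
    have "norm (D *v P i (best_resp blk f Qs x - best_resp blk f Qs y)) / c i \<le> Gm * N" for i
    proof -
      have eq: "P i (best_resp blk f Qs x - best_resp blk f Qs y) = br i x - br i y"
        by (simp add: blk_proj_diff Pbest x y)
      have "alpha i * norm (D *v (br i x - br i y)) \<le> (\<Sum>j\<in>UNIV-{i}. beta i j * norm (D *v P j (x - y)))"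
        by (rule contr[OF x y brp[OF x] brp[OF y]])
      also have "\<dots> \<le> (\<Sum>j\<in>UNIV-{i}. beta i j * (c j * N))"
        by (intro sum_mono mult_left_mono N_ge beta_nonneg)
      finally have "norm (D *v (br i x - br i y)) \<le> (\<Sum>j\<in>UNIV-{i}. beta i j * (c j * N)) / alpha i"
        using al[of i] by (simp add: le_divide_eq mult.commute)
      also have "\<dots> = (\<Sum>j\<in>UNIV-{i}. beta i j / alpha i * c j) * N"
        by (simp add: sum_divide_distrib sum_distrib_left sum_distrib_right mult_ac)
      also have "\<dots> = c i * row i * N" using cpos[of i] by (simp add: row_def rowsum)
      finally have "norm (D *v (br i x - br i y)) / c i \<le> row i * N"
        using cpos[of i] by (simp add: divide_le_eq mult_ac)
      also have "row i * N \<le> Gm * N" unfolding Gm_def' using N0 by (intro mult_right_mono Max_ge) auto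
      finally show ?thesis using eq by simp
    qed
    then show ?thesis unfolding N_def block_vnorm_def by (simp add: Max_le_iff)
  qed
  show ?thesis using ex1 bestQ cpos Gm_lt contraction unfolding Gm_def by blast
qed

end

theorem mainTheorem4:
  fixes blk :: "'k::finite \<Rightarrow> 'p::finite"
    and Qs :: "'p \<Rightarrow> (real^'k) set"
    and f :: "'p \<Rightarrow> real^'k \<Rightarrow> real"
    and grad :: "'p \<Rightarrow> real^'k \<Rightarrow> real^'k"
    and hess :: "'p \<Rightarrow> real^'k \<Rightarrow> real^'k^'k"
    and U :: "(real^'k) set"
    and C :: "real^'k^'k"
  assumes blocks_nonempty: "surj blk"
    and Q_sub: "\<And>i. Qs i \<subseteq> blk_space blk i"
    and Q_ne: "\<And>i. Qs i \<noteq> {}"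
    and Q_closed: "\<And>i. closed (Qs i)"
    and Q_convex: "\<And>i. convex (Qs i)"
    and U_open: "open U"
    and Q_U: "prod_set blk Qs \<subseteq> U"
    and f_deriv: "\<And>i x. x \<in> U \<Longrightarrow> (f i has_derivative (\<lambda>h. grad i x \<bullet> h)) (at x)"
    and grad_deriv: "\<And>i x. x \<in> U \<Longrightarrow> (grad i has_derivative (\<lambda>h. hess i x *v h)) (at x)"
    and hess_cont: "\<And>i. continuous_on U (hess i)"
    and hess_bdd: "\<And>i. bounded (hess i ` prod_set blk Qs)"
    and f_convex: "\<And>i x. x \<in> prod_set blk Qs \<Longrightarrow> convex_on (Qs i) (\<lambda>y. f i (blk_upd blk x i y))"
    and C_blockdiag: "block_diag blk C"
    and C_invertible: "invertible C"
    and P: "P_matrix (Upsilon_F blk C hess (prod_set blk Qs))"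
  shows "(\<forall>x\<in>prod_set blk Qs. \<forall>i. \<exists>!y. is_best_resp blk f Qs x i y)
    \<and> (\<forall>x\<in>prod_set blk Qs. best_resp blk f Qs x \<in> prod_set blk Qs)
    \<and> (\<exists>c. (\<forall>i. c i > 0)
         \<and> weighted_inf_mat_norm c (Gamma_F blk C hess (prod_set blk Qs)) < 1
         \<and> (\<forall>x\<in>prod_set blk Qs. \<forall>y\<in>prod_set blk Qs.
              block_vnorm blk C c (best_resp blk f Qs x - best_resp blk f Qs y)
                \<le> weighted_inf_mat_norm c (Gamma_F blk C hess (prod_set blk Qs))
                   * block_vnorm blk C c (x - y)))"
  proof -
  interpret nep blk Qs f grad hess U C
    using blocks_nonempty Q_sub Q_ne Q_closed Q_convex U_open Q_U f_deriv grad_deriv hess_cont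
      hess_bdd f_convex C_blockdiag C_invertible
    by unfold_locales auto
  show ?thesis using main_loc[OF P] .
qed

end
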